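(* Let $G$ be a connected graph that is not complete and let $v\in V(G)$ be a universal vertex of $G$. Let $G_v$ be the graph obtained from $G$ by adding a new vertex $v'$ adjacent to $v$ and to every vertex of $N_G(v)$ (i.e. a true twin of $v$). Then $\chi(\mathcal{R}(G_v))=\chi(\mathcal{R}(G))$.
   Context: For a connected graph $G$, a search tree on $G$ is a rooted tree with vertex set $V(G)$ defined recursively: its root is some vertex $r\in V(G)$, and the children of $r$ are the roots of search trees on the connected components of $G-r$. For a rooted tree $T$ and $w\in V(T)$, $T|w$ denotes the subtree rooted at $w$. Let $T$ be a search tree on $G$, let $v$ be a child of $u$ in $T$, and let $p$ be the parent of $u$ (if it exists). The $uv$-rotation transforms $T$ into the search tree $T'$ in which: $u$ is a child of $v$ and $v$ is a child of $p$ (or $v$ is the root if $u$ was the root); every subtree of $u$ in $T$ other than $T|v$ is a subtree of $u$ in $T'$; and every subtree $S$ of $v$ in $T$ is a subtree of $u$ in $T'$ if $u$ is adjacent in $G$ to some vertex of $S$, and a subtree of $v$ in $T'$ otherwise. The rotation graph $\mathcal{R}(G)$ is the graph whose vertices are the search trees on $G$, two being adjacent iff they differ by one rotation. $\chi$ denotes chromatic number. A vertex is universal if it is adjacent to all other vertices. *)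

theory Defs
  imports Main
begin

definition simple_graph :: "'a set \<Rightarrow> ('a \<Rightarrow> 'a \<Rightarrow> bool) \<Rightarrow> bool" where
  "simple_graph V E \<longleftrightarrow> finite V \<and> (\<forall>x y. E x y \<longrightarrow> x \<in> V \<and> y \<in> V)
     \<and> (\<forall>x y. E x y \<longrightarrow> E y x) \<and> (\<forall>x. \<not> E x x)"

definition reach_in :: "('a \<Rightarrow> 'a \<Rightarrow> bool) \<Rightarrow> 'a set \<Rightarrow> 'a \<Rightarrow> 'a \<Rightarrow> bool" where
  "reach_in E S = (\<lambda>a b. E a b \<and> a \<in> S \<and> b \<in> S)\<^sup>*\<^sup>*"

definition connected_on :: "('a \<Rightarrow> 'a \<Rightarrow> bool) \<Rightarrow> 'a set \<Rightarrow> bool" where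
  "connected_on E S \<longleftrightarrow> S \<noteq> {} \<and> (\<forall>x\<in>S. \<forall>y\<in>S. reach_in E S x y)"

definition components :: "('a \<Rightarrow> 'a \<Rightarrow> bool) \<Rightarrow> 'a set \<Rightarrow> 'a set set" where
  "components E S = (\<lambda>x. {y \<in> S. reach_in E S x y}) ` S"

text \<open>A rooted tree on S is encoded by its parent function: the parent of x is
  Some p, the root and all vertices outside S are mapped to None.
  search_tree E S par: par encodes a search tree on the (connected) graph G[S].\<close>
inductive search_tree :: "('a \<Rightarrow> 'a \<Rightarrow> bool) \<Rightarrow> 'a set \<Rightarrow> ('a \<Rightarrow> 'a option) \<Rightarrow> bool"
  for E where
  "\<lbrakk> connected_on E S; r \<in> S; par r = None; \<forall>x. x \<notin> S \<longrightarrow> par x = None;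
     \<forall>C \<in> components E (S - {r}).
        \<exists>c \<in> C. par c = Some r \<and>
          search_tree E C (\<lambda>x. if x \<in> C \<and> x \<noteq> c then par x else None) \<rbrakk>
   \<Longrightarrow> search_tree E S par"

definition subtree :: "('a \<Rightarrow> 'a option) \<Rightarrow> 'a \<Rightarrow> 'a set" where
  "subtree par w = {x. (\<lambda>a b. par a = Some b)\<^sup>*\<^sup>* x w}"

definition rotate :: "('a \<Rightarrow> 'a \<Rightarrow> bool) \<Rightarrow> ('a \<Rightarrow> 'a option) \<Rightarrow> 'a \<Rightarrow> 'a \<Rightarrow> ('a \<Rightarrow> 'a option)" where
  "rotate E par u v = (\<lambda>x.
     if x = v then par u
     else if x = u then Some v
     else if par x = Some v then
       (if \<exists>y \<in> subtree par x. E u y then Some u else Some v)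
     else par x)"

definition rot_vertices :: "'a set \<Rightarrow> ('a \<Rightarrow> 'a \<Rightarrow> bool) \<Rightarrow> ('a \<Rightarrow> 'a option) set" where
  "rot_vertices V E = {par. search_tree E V par}"

definition rot_step :: "('a \<Rightarrow> 'a \<Rightarrow> bool) \<Rightarrow> ('a \<Rightarrow> 'a option) \<Rightarrow> ('a \<Rightarrow> 'a option) \<Rightarrow> bool" where
  "rot_step E T T' \<longleftrightarrow> (\<exists>u v. T v = Some u \<and> T' = rotate E T u v)"

definition rot_adj :: "('a \<Rightarrow> 'a \<Rightarrow> bool) \<Rightarrow> ('a \<Rightarrow> 'a option) \<Rightarrow> ('a \<Rightarrow> 'a option) \<Rightarrow> bool" where
  "rot_adj E T T' \<longleftrightarrow> rot_step E T T' \<or> rot_step E T' T"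

definition chromatic_number :: "'b set \<Rightarrow> ('b \<Rightarrow> 'b \<Rightarrow> bool) \<Rightarrow> nat" where
  "chromatic_number W A = (LEAST k. \<exists>c :: 'b \<Rightarrow> nat.
      (\<forall>x\<in>W. c x < k) \<and> (\<forall>x\<in>W. \<forall>y\<in>W. A x y \<longrightarrow> c x \<noteq> c y))"

definition add_twin :: "('a \<Rightarrow> 'a \<Rightarrow> bool) \<Rightarrow> 'a \<Rightarrow> 'a \<Rightarrow> ('a \<Rightarrow> 'a \<Rightarrow> bool)" where
  "add_twin E v v' = (\<lambda>x y. E x y
      \<or> (x = v' \<and> (y = v \<or> E v y))
      \<or> (y = v' \<and> (x = v \<or> E v x)))"

end

theory Submission
  imports Defs
begin



definition anc :: "('a \<Rightarrow> 'a option) \<Rightarrow> 'a \<Rightarrow> 'a \<Rightarrow> bool" where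
  "anc T = (\<lambda>a b. T a = Some b)\<^sup>*\<^sup>*"

lemma subtree_anc: "subtree T w = {x. anc T x w}"
  by (simp add: subtree_def anc_def)

lemma anc_refl[simp]: "anc T x x" by (simp add: anc_def)

lemma anc_step: "T x = Some y \<Longrightarrow> anc T y z \<Longrightarrow> anc T x z"
  unfolding anc_def by (simp add: converse_rtranclp_into_rtranclp)

lemma anc_step2: "anc T x y \<Longrightarrow> T y = Some z \<Longrightarrow> anc T x z"
  unfolding anc_def by (simp add: rtranclp.rtrancl_into_rtrancl)

lemma anc_trans: "anc T x y \<Longrightarrow> anc T y z \<Longrightarrow> anc T x z"
  unfolding anc_def by simp

lemma anc_cases: "anc T x y \<Longrightarrow> x = y \<or> (\<exists>p. T x = Some p \<and> anc T p y)"
  unfolding anc_def by (induction rule: converse_rtranclp_induct) auto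

lemma anc_cases2: "anc T x y \<Longrightarrow> x = y \<or> (\<exists>c. T c = Some y \<and> anc T x c)"
  unfolding anc_def by (induction rule: rtranclp_induct) auto

lemma anc_None: "anc T x y \<Longrightarrow> T x = None \<Longrightarrow> x = y"
  using anc_cases by fastforce

lemma anc_det: "anc T x y \<Longrightarrow> anc T x z \<Longrightarrow> anc T y z \<or> anc T z y"
  unfolding anc_def
proof (induction arbitrary: z rule: converse_rtranclp_induct)
  case base thus ?case by simp
next
  case (step a b)
  note IH = step.IH
  note ab = step.hyps(1)
  note hby = step.hyps(2)
  from step.prems show ?case
  proof (cases rule: converse_rtranclpE)
    case base
    have "(\<lambda>a b. T a = Some b)\<^sup>*\<^sup>* a y" using ab hby by (rule converse_rtranclp_into_rtranclp)
    with base show ?thesis by simp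
  next
    case (step c)
    then have "c = b" using ab by simp
    then show ?thesis using IH step(2) by blast
  qed
qed

definition cyc :: "('a \<Rightarrow> 'a option) \<Rightarrow> 'a \<Rightarrow> bool" where
  "cyc T x \<longleftrightarrow> (\<exists>p. T x = Some p \<and> anc T p x)"

lemma cyc_next: assumes "cyc T x" "T x = Some y" shows "cyc T y"
proof -
  from assms have "anc T y x" by (auto simp: cyc_def)
  then show ?thesis using assms(2) unfolding cyc_def
    by (metis anc_cases anc_step2 anc_refl)
qed

lemma cyc_anc: assumes "anc T x y" "cyc T x" shows "cyc T y"
  using assms unfolding anc_def
  by (induction rule: rtranclp_induct) (auto intro: cyc_next)

lemma no_cyc: assumes "anc T x r" "T r = None" shows "\<not> cyc T x"
  using cyc_anc[OF assms(1)] assms(2) by (auto simp: cyc_def)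

lemma no_self: assumes "anc T x r" "T r = None" shows "T x \<noteq> Some x"
  using no_cyc[OF assms] by (auto simp: cyc_def)

lemma anc_antisym: assumes "anc T x r" "T r = None" "anc T x y" "anc T y x" shows "x = y"
proof (rule ccontr)
  assume "x \<noteq> y"
  from anc_cases[OF assms(3)] \<open>x \<noteq> y\<close> obtain p where p: "T x = Some p" "anc T p y" by blast
  have "cyc T x" unfolding cyc_def using p(1) anc_trans[OF p(2) assms(4)] by blast
  with no_cyc[OF assms(1,2)] show False by blast
qed

lemma same_parent: assumes "anc T x r" "T r = None" "T x = Some p" "T y = Some p" "anc T x y"
  shows "x = y"
proof (rule ccontr)
  assume "x \<noteq> y"
  from anc_cases[OF assms(5)] \<open>x \<noteq> y\<close> obtain p' where p: "T x = Some p'" "anc T p' y" by blast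
  then have "anc T p y" using assms(3) by simp
  then have "cyc T y" unfolding cyc_def using assms(4) by blast
  have "anc T y r \<or> anc T r y" by (rule anc_det[OF assms(5,1)])
  moreover have "\<not> anc T r y"
  proof
    assume "anc T r y" then have "r = y" using anc_None assms(2) by metis
    then show False using assms(2,4) by simp
  qed
  ultimately have "anc T y r" by blast
  then show False using no_cyc[of T y r] assms(2) \<open>cyc T y\<close> by blast
qed




definition good :: "('a \<Rightarrow> 'a \<Rightarrow> bool) \<Rightarrow> 'a set \<Rightarrow> ('a \<Rightarrow> 'a option) \<Rightarrow> bool" where
 "good E S T \<longleftrightarrow> (\<forall>x. x \<notin> S \<longrightarrow> T x = None) \<and> (\<forall>x y. T x = Some y \<longrightarrow> y \<in> S)
   \<and> (\<exists>r\<in>S. T r = None \<and> (\<forall>x\<in>S. anc T x r))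
   \<and> (\<forall>a\<in>S. \<forall>b\<in>S. E a b \<longrightarrow> anc T a b \<or> anc T b a)
   \<and> (\<forall>x\<in>S. connected_on E (subtree T x))"

lemma good_out: "good E S T \<Longrightarrow> x \<notin> S \<Longrightarrow> T x = None"
  unfolding good_def by blast
lemma good_par: "good E S T \<Longrightarrow> T x = Some y \<Longrightarrow> y \<in> S"
  unfolding good_def by blast
lemma good_dom: "good E S T \<Longrightarrow> T x = Some y \<Longrightarrow> x \<in> S"
  unfolding good_def by (metis option.distinct(1))
lemma good_root: "good E S T \<Longrightarrow> \<exists>r\<in>S. T r = None \<and> (\<forall>x\<in>S. anc T x r)"
  unfolding good_def by blast
lemma good_edge: "good E S T \<Longrightarrow> a \<in> S \<Longrightarrow> b \<in> S \<Longrightarrow> E a b \<Longrightarrow> anc T a b \<or> anc T b a"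
  unfolding good_def by blast
lemma good_conn: "good E S T \<Longrightarrow> x \<in> S \<Longrightarrow> connected_on E (subtree T x)"
  unfolding good_def by blast
lemma goodI:
  assumes "\<And>x. x \<notin> S \<Longrightarrow> T x = None" "\<And>x y. T x = Some y \<Longrightarrow> y \<in> S"
    "r \<in> S" "T r = None" "\<And>x. x \<in> S \<Longrightarrow> anc T x r"
    "\<And>a b. a \<in> S \<Longrightarrow> b \<in> S \<Longrightarrow> E a b \<Longrightarrow> anc T a b \<or> anc T b a"
    "\<And>x. x \<in> S \<Longrightarrow> connected_on E (subtree T x)"
  shows "good E S T"
  unfolding good_def using assms by blast

definition restr :: "'a set \<Rightarrow> 'a \<Rightarrow> ('a \<Rightarrow> 'a option) \<Rightarrow> ('a \<Rightarrow> 'a option)" where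
  "restr C c T = (\<lambda>x. if x \<in> C \<and> x \<noteq> c then T x else None)"

lemma restr_eq: "a \<in> C \<Longrightarrow> a \<noteq> c \<Longrightarrow> restr C c T a = T a"
  by (simp add: restr_def)
lemma restr_out: "a \<notin> C \<or> a = c \<Longrightarrow> restr C c T a = None"
  by (auto simp add: restr_def)

lemma restr_mono: "anc (restr C c T) a b \<Longrightarrow> anc T a b"
  unfolding anc_def restr_def
  by (induction rule: rtranclp_induct) (auto split: if_splits intro: rtranclp.rtrancl_into_rtrancl)

lemma restr_anc:
  assumes "T c = Some r" "T r = None"
    and par0: "\<forall>x y. x \<in> C \<longrightarrow> x \<noteq> c \<longrightarrow> T x = Some y \<longrightarrow> y \<in> C"
  shows "anc T a b \<Longrightarrow> a \<in> C \<Longrightarrow> b \<noteq> r \<Longrightarrow> b \<in> C \<and> anc (restr C c T) a b"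
  unfolding anc_def
proof (induction rule: converse_rtranclp_induct)
  case base then show ?case by simp
next
  case (step a a')
  have par: "\<And>x y. x \<in> C \<Longrightarrow> x \<noteq> c \<Longrightarrow> T x = Some y \<Longrightarrow> y \<in> C" using par0 by blast
  show ?case
  proof (cases "a = c")
    case True
    then have "a' = r" using step assms by simp
    then have "anc T r b" using step(2) unfolding anc_def by simp
    then have "b = r" using assms(2) anc_None by metis
    then show ?thesis using step by simp
  next
    case False
    then have "a' \<in> C" using par step by blast
    then have "b \<in> C \<and> (\<lambda>a b. restr C c T a = Some b)\<^sup>*\<^sup>* a' b" using step by blast
    moreover have "restr C c T a = Some a'" using False step by (simp add: restr_def)
    ultimately show ?thesis by (meson converse_rtranclp_into_rtranclp)
  qed
qed

lemma reach_in_mono: assumes "reach_in E A a b" "A \<subseteq> B" shows "reach_in E B a b"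
proof -
  have "(\<lambda>a b. E a b \<and> a \<in> A \<and> b \<in> A) \<le> (\<lambda>a b. E a b \<and> a \<in> B \<and> b \<in> B)" using assms(2) by auto
  then have "(\<lambda>a b. E a b \<and> a \<in> A \<and> b \<in> A)\<^sup>*\<^sup>* \<le> (\<lambda>a b. E a b \<and> a \<in> B \<and> b \<in> B)\<^sup>*\<^sup>*"
    by (rule rtranclp_mono)
  then show ?thesis using assms(1) unfolding reach_in_def by (rule predicate2D)
qed

lemma reach_in_sym: assumes "\<forall>a b. E a b \<longrightarrow> E b a" shows "reach_in E A a b \<Longrightarrow> reach_in E A b a"
  unfolding reach_in_def
proof (induction rule: rtranclp_induct)
  case (step b c)
  then have "E c b \<and> c \<in> A \<and> b \<in> A" using assms by blast
  then show ?case using step(3) converse_rtranclp_into_rtranclp[where r="\<lambda>a b. E a b \<and> a \<in> A \<and> b \<in> A" and a=c and b=b and c=a] by blast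
qed simp

lemma reach_in_trans: "reach_in E A a b \<Longrightarrow> reach_in E A b c \<Longrightarrow> reach_in E A a c"
  unfolding reach_in_def by simp

lemma reach_in_mem: "reach_in E A a b \<Longrightarrow> a \<in> A \<Longrightarrow> b \<in> A"
  unfolding reach_in_def
  by (induction rule: rtranclp_induct) auto

lemma reach_in_step: "reach_in E A a b \<Longrightarrow> E b c \<Longrightarrow> b \<in> A \<Longrightarrow> c \<in> A \<Longrightarrow> reach_in E A a c"
  unfolding reach_in_def by (simp add: rtranclp.rtrancl_into_rtrancl)

lemma reach_in_edge: "E b c \<Longrightarrow> b \<in> A \<Longrightarrow> c \<in> A \<Longrightarrow> reach_in E A b c"
  unfolding reach_in_def by auto

lemma anc_in: "anc T y x \<Longrightarrow> x \<in> S \<Longrightarrow> (\<forall>x y. T x = Some y \<longrightarrow> y \<in> S) \<Longrightarrow> (\<forall>x. x \<notin> S \<longrightarrow> T x = None) \<Longrightarrow> y \<in> S"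
  using anc_cases by fastforce




lemma st_good:
  assumes "search_tree E S T" and symE: "\<And>a b. E a b \<Longrightarrow> E b a"
  shows "good E S T"
  using assms(1)
proof (induction rule: search_tree.induct)
  case (1 S r T)
  have symE': "\<forall>a b. E a b \<longrightarrow> E b a" using symE by blast
  define cp where "cp x = {y \<in> S - {r}. reach_in E (S - {r}) x y}" for x
  define ch where "ch C = (SOME c. c \<in> C \<and> T c = Some r \<and> good E C (restr C c T))" for C
  have ch: "ch C \<in> C \<and> T (ch C) = Some r \<and> good E C (restr C (ch C) T)"
    if "C \<in> components E (S - {r})" for C
  proof -
    from 1(5) that obtain c where "c \<in> C \<and> T c = Some r \<and> good E C (restr C c T)"
      unfolding restr_def by blast
    then show ?thesis unfolding ch_def by (rule someI)
  qed
  have compin: "cp x \<in> components E (S - {r})" if "x \<in> S - {r}" for x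
    using that unfolding components_def cp_def by blast
  have chx: "ch (cp x) \<in> cp x" "T (ch (cp x)) = Some r" "good E (cp x) (restr (cp x) (ch (cp x)) T)"
    if "x \<in> S - {r}" for x
    using ch[OF compin[OF that]] by auto
  have xin: "x \<in> cp x" if "x \<in> S - {r}" for x
    using that by (simp add: reach_in_def cp_def)
  have cpS: "cp x \<subseteq> S - {r}" for x by (auto simp: cp_def)
  have compeq: "cp x = cp y" if "y \<in> cp x" for x y
  proof -
    have xy: "reach_in E (S-{r}) x y" using that by (simp add: cp_def)
    then have yx: "reach_in E (S-{r}) y x" using reach_in_sym[OF symE'] by blast
    have "reach_in E (S-{r}) x z \<longleftrightarrow> reach_in E (S-{r}) y z" for z
      using reach_in_trans[OF xy, of z] reach_in_trans[OF yx, of z] by blast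
    then show ?thesis by (simp add: cp_def)
  qed
  have parC: "b \<in> cp x"
    if "x \<in> S - {r}" "a \<in> cp x" "a \<noteq> ch (cp x)" "T a = Some b" for x a b
  proof -
    have "restr (cp x) (ch (cp x)) T a = Some b" using that restr_eq by metis
    then show ?thesis using good_par chx(3)[OF that(1)] by metis
  qed
  have rootC: "anc (restr (cp x) (ch (cp x)) T) a (ch (cp x))" if "x \<in> S - {r}" "a \<in> cp x" for x a
  proof -
    have g: "good E (cp x) (restr (cp x) (ch (cp x)) T)" using chx that by blast
    then obtain \<rho> where \<rho>: "\<rho> \<in> cp x" "restr (cp x) (ch (cp x)) T \<rho> = None"
       "\<forall>y\<in>cp x. anc (restr (cp x) (ch (cp x)) T) y \<rho>" using good_root by blast
    have "restr (cp x) (ch (cp x)) T (ch (cp x)) = None" by (simp add: restr_def)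
    moreover have "anc (restr (cp x) (ch (cp x)) T) (ch (cp x)) \<rho>" using \<rho>(3) chx(1)[OF that(1)] by blast
    ultimately have "ch (cp x) = \<rho>" using anc_None by metis
    then show ?thesis using \<rho> that by simp
  qed
  have toroot: "anc T a r" if "a \<in> S" for a
  proof (cases "a = r")
    case False
    then have a: "a \<in> S - {r}" using that by simp
    have "anc T a (ch (cp a))" using restr_mono[OF rootC[OF a xin[OF a]]] .
    then show ?thesis using chx(2)[OF a] anc_step2 by metis
  qed simp
  have outside: "\<And>x. x \<notin> S \<Longrightarrow> T x = None" using 1(4) by blast
  have parS: "y \<in> S" if "T x = Some y" for x y
  proof -
    have x: "x \<in> S - {r}" using outside 1(3) that by fastforce
    show "y \<in> S"
    proof (cases "x = ch (cp x)")
      case True then show ?thesis using chx(2)[OF x] that 1(2) by simp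
    next
      case False then show ?thesis using parC[OF x xin[OF x] False that] cpS by blast
    qed
  qed
  have subS: "subtree T x \<subseteq> S" if "x \<in> S" for x
  proof
    fix y assume "y \<in> subtree T x"
    then have "anc T y x" by (simp add: subtree_anc)
    then show "y \<in> S" using anc_cases[of T y x] that parS outside by (metis option.distinct(1))
  qed
  have edges: "anc T a b \<or> anc T b a" if ab: "a \<in> S" "b \<in> S" "E a b" for a b
  proof (cases "a = r \<or> b = r")
    case True then show ?thesis using toroot ab by blast
  next
    case False
    then have a: "a \<in> S - {r}" using ab by simp
    have "reach_in E (S - {r}) a b" using ab False by (intro reach_in_edge) auto
    then have b: "b \<in> cp a" using False ab by (simp add: cp_def)
    have "anc (restr (cp a) (ch (cp a)) T) a b \<or> anc (restr (cp a) (ch (cp a)) T) b a"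
      using good_edge[OF chx(3)[OF a] xin[OF a] b ab(3)] .
    then show ?thesis using restr_mono[of "cp a" "ch (cp a)" T a b] restr_mono[of "cp a" "ch (cp a)" T b a] by blast
  qed
  have subC: "subtree T x = subtree (restr (cp x) (ch (cp x)) T) x" if x: "x \<in> S - {r}" for x
  proof
    show "subtree (restr (cp x) (ch (cp x)) T) x \<subseteq> subtree T x"
      using restr_mono[of "cp x" "ch (cp x)" T _ x] by (auto simp: subtree_anc)
  next
    show "subtree T x \<subseteq> subtree (restr (cp x) (ch (cp x)) T) x"
    proof
      fix y assume yy: "y \<in> subtree T x"
      then have yx: "anc T y x" by (simp add: subtree_anc)
      have "y \<in> S" using subS x yy by blast
      moreover have "y \<noteq> r" using yx 1(3) x anc_None by fastforce
      ultimately have y: "y \<in> S - {r}" by simp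
      have pc: "\<forall>a b. a \<in> cp y \<longrightarrow> a \<noteq> ch (cp y) \<longrightarrow> T a = Some b \<longrightarrow> b \<in> cp y"
        using parC[OF y] by blast
      have "x \<in> cp y \<and> anc (restr (cp y) (ch (cp y)) T) y x"
        using restr_anc[of T "ch (cp y)" r "cp y", OF chx(2)[OF y] 1(3) pc yx xin[OF y]] x by simp
      moreover then have "cp y = cp x" using compeq by blast
      ultimately show "y \<in> subtree (restr (cp x) (ch (cp x)) T) x" by (simp add: subtree_anc)
    qed
  qed
  have conn: "connected_on E (subtree T x)" if "x \<in> S" for x
  proof (cases "x = r")
    case True
    have "subtree T r = S" using subS[OF 1(2)] toroot by (auto simp: subtree_anc)
    then show ?thesis using True 1(1) by simp
  next
    case False
    then have x: "x \<in> S - {r}" using that by simp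
    show ?thesis using subC[OF x] good_conn[OF chx(3)[OF x] xin[OF x]] by simp
  qed
  show ?case by (rule goodI[OF outside parS 1(2,3) toroot edges conn])
qed




lemma good_st:
  assumes "finite S" "good E S T"
  shows "search_tree E S T"
  using assms
proof (induction S arbitrary: T rule: finite_psubset_induct)
  case (psubset S T)
  note g = psubset.prems
  obtain r where r: "r \<in> S" "T r = None" "\<And>x. x \<in> S \<Longrightarrow> anc T x r" using good_root[OF g] by blast
  have outside: "\<And>x. x \<notin> S \<Longrightarrow> T x = None" using good_out[OF g] by blast
  have subS: "subtree T x \<subseteq> S" if "x \<in> S" for x
  proof
    fix y assume "y \<in> subtree T x"
    then have "anc T y x" by (simp add: subtree_anc)
    then show "y \<in> S" using anc_cases[of T y x] that good_dom[OF g] by blast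
  qed
  have "subtree T r = S" using subS[OF r(1)] r(3) by (auto simp: subtree_anc)
  then have conn: "connected_on E S" using good_conn[OF g r(1)] by simp
  have comps: "\<exists>c\<in>C. T c = Some r \<and> search_tree E C (\<lambda>x. if x \<in> C \<and> x \<noteq> c then T x else None)"
    if C: "C \<in> components E (S - {r})" for C
  proof -
    obtain a where Ca: "C = {y \<in> S - {r}. reach_in E (S - {r}) a y}" and a: "a \<in> S - {r}"
      using C unfolding components_def by (rule imageE)
    have "anc T a r" using r(3) a by blast
    from anc_cases2[OF this] a obtain c where c: "T c = Some r" "anc T a c" by blast
    have cS: "c \<in> S" using good_dom[OF g c(1)] .
    have notr: "y \<noteq> r" if "anc T y c" for y
    proof
      assume "y = r"
      then have "r = c" using anc_None[of T r c] that r(2) by simp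
      then show False using c(1) r(2) by simp
    qed
    have subc: "subtree T c \<subseteq> S - {r}" using subS[OF cS] notr by (auto simp: subtree_anc)
    have CC: "C = subtree T c"
    proof
      show "subtree T c \<subseteq> C"
      proof
        fix y assume y: "y \<in> subtree T c"
        have ac: "a \<in> subtree T c" using c(2) by (simp add: subtree_anc)
        have "reach_in E (subtree T c) a y"
          using good_conn[OF g cS] ac y unfolding connected_on_def by blast
        then have "reach_in E (S - {r}) a y" using reach_in_mono[OF _ subc] by blast
        then show "y \<in> C" using Ca y subc by blast
      qed
    next
      show "C \<subseteq> subtree T c"
      proof
        fix y assume "y \<in> C"
        then have "reach_in E (S - {r}) a y" using Ca by blast
        then have "anc T y c" unfolding reach_in_def
        proof (induction rule: rtranclp_induct)
          case base then show ?case using c(2) by simp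
        next
          case (step z y)
          then have zy: "E z y" "z \<in> S" "y \<in> S" "y \<noteq> r" by auto
          have "anc T z y \<or> anc T y z" using good_edge[OF g zy(2,3,1)] .
          then show ?case
          proof
            assume yz: "anc T y z" show ?thesis using anc_trans[OF yz step(3)] .
          next
            assume zy2: "anc T z y"
            have "anc T y c \<or> anc T c y" using anc_det[OF zy2 step(3)] .
            then show ?thesis
            proof
              assume "anc T c y"
              then have "c = y \<or> (\<exists>p. T c = Some p \<and> anc T p y)" by (rule anc_cases)
              then show ?thesis
              proof
                assume "\<exists>p. T c = Some p \<and> anc T p y"
                then have "anc T r y" using c(1) by auto
                then have "r = y" using anc_None[of T r y] r(2) by simp
                then show ?thesis using zy(4) by simp
              qed simp
            qed
          qed
        qed
        then show "y \<in> subtree T c" by (simp add: subtree_anc)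
      qed
    qed
    have cC: "c \<in> C" using CC by (simp add: subtree_anc)
    have parC: "\<forall>x y. x \<in> C \<longrightarrow> x \<noteq> c \<longrightarrow> T x = Some y \<longrightarrow> y \<in> C"
    proof (intro allI impI)
      fix x y assume xy: "x \<in> C" "x \<noteq> c" "T x = Some y"
      have "anc T x c" using xy(1) CC by (simp add: subtree_anc)
      then have "anc T y c" using anc_cases[of T x c] xy(2,3) by auto
      then show "y \<in> C" using CC by (simp add: subtree_anc)
    qed
    have ra: "b \<in> C \<and> anc (restr C c T) a' b" if "anc T a' b" "a' \<in> C" "b \<noteq> r" for a' b
      using restr_anc[OF c(1) r(2) parC that] .
    have gC: "good E C (restr C c T)"
    proof (rule goodI[where r=c])
      show "\<And>x. x \<notin> C \<Longrightarrow> restr C c T x = None" by (simp add: restr_def)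
      show "\<And>x y. restr C c T x = Some y \<Longrightarrow> y \<in> C"
        using parC by (auto simp: restr_def split: if_splits)
      show "c \<in> C" by (fact cC)
      show "restr C c T c = None" by (simp add: restr_def)
      show "\<And>x. x \<in> C \<Longrightarrow> anc (restr C c T) x c"
        using ra CC notr by (auto simp: subtree_anc)
      show "anc (restr C c T) a' b \<or> anc (restr C c T) b a'" if "a' \<in> C" "b \<in> C" "E a' b" for a' b
      proof -
        have "a' \<in> S" "b \<in> S" using that CC subc by auto
        then have "anc T a' b \<or> anc T b a'" using good_edge[OF g _ _ that(3)] by blast
        moreover have "a' \<noteq> r" "b \<noteq> r" using that CC subc by auto
        ultimately show ?thesis using ra that by blast
      qed
      show "connected_on E (subtree (restr C c T) x)" if x: "x \<in> C" for x
      proof -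
        have "subtree (restr C c T) x = subtree T x"
        proof
          show "subtree (restr C c T) x \<subseteq> subtree T x"
            using restr_mono[of C c T _ x] by (auto simp: subtree_anc)
        next
          show "subtree T x \<subseteq> subtree (restr C c T) x"
          proof
            fix y assume "y \<in> subtree T x"
            then have yx: "anc T y x" by (simp add: subtree_anc)
            have "anc T x c" using x CC by (simp add: subtree_anc)
            then have "y \<in> C" using yx CC anc_trans by (metis mem_Collect_eq subtree_anc)
            moreover have "x \<noteq> r" using x CC subc by auto
            ultimately show "y \<in> subtree (restr C c T) x" using ra yx by (simp add: subtree_anc)
          qed
        qed
        moreover have "x \<in> S" using x CC subc by auto
        ultimately show ?thesis using good_conn[OF g] by simp
      qed
    qed
    have "C \<subset> S" using CC subc r(1) by blast
    then have "search_tree E C (restr C c T)" using psubset.IH gC by blast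
    then show ?thesis using cC c(1) unfolding restr_def by blast
  qed
  show ?case
  proof (rule search_tree.intros[of E S r T])
    show "connected_on E S" by (fact conn)
    show "r \<in> S" by (fact r(1))
    show "T r = None" by (fact r(2))
    show "\<forall>x. x \<notin> S \<longrightarrow> T x = None" using outside by blast
    show "\<forall>C\<in>components E (S - {r}). \<exists>c\<in>C. T c = Some r \<and> search_tree E C (\<lambda>x. if x \<in> C \<and> x \<noteq> c then T x else None)"
      using comps by blast
  qed
qed




definition ancs :: "('a \<Rightarrow> 'a option) \<Rightarrow> 'a \<Rightarrow> 'a set" where
  "ancs T x = {y. anc T x y}"

lemma ancs_Some: "T x = Some p \<Longrightarrow> ancs T x = insert x (ancs T p)"
  unfolding ancs_def using anc_cases[of T x] anc_step[of T x p] by auto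

lemma ancs_None: "T x = None \<Longrightarrow> ancs T x = {x}"
  unfolding ancs_def using anc_None[of T x] by auto

lemma ancs_agree:
  assumes "\<And>y. y \<in> ancs T a \<Longrightarrow> T' y = T y"
  shows "ancs T' a = ancs T a"
proof
  show "ancs T' a \<subseteq> ancs T a"
  proof
    fix z assume "z \<in> ancs T' a"
    then have "anc T' a z" by (simp add: ancs_def)
    then show "z \<in> ancs T a" unfolding anc_def
    proof (induction rule: rtranclp_induct)
      case base then show ?case by (simp add: ancs_def)
    next
      case (step y z)
      then have "T y = Some z" using assms by simp
      then show ?case using step(3) anc_step2[of T a y z] by (simp add: ancs_def)
    qed
  qed
next
  show "ancs T a \<subseteq> ancs T' a"
  proof
    fix z assume "z \<in> ancs T a"
    then have "anc T a z" by (simp add: ancs_def)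
    then show "z \<in> ancs T' a" unfolding anc_def
    proof (induction rule: rtranclp_induct)
      case base then show ?case by (simp add: ancs_def)
    next
      case (step y z)
      have "y \<in> ancs T a" using step(1) by (simp add: ancs_def anc_def)
      then have "T' y = Some z" using assms step(2) by simp
      then show ?case using step(3) anc_step2[of T' a y z] by (simp add: ancs_def)
    qed
  qed
qed

lemma path_agree:
  assumes "anc T a b" "\<And>y. anc T a y \<Longrightarrow> anc T y b \<Longrightarrow> y \<noteq> b \<Longrightarrow> T' y = T y"
  shows "anc T' a b"
  using assms unfolding anc_def
proof (induction rule: converse_rtranclp_induct)
  case base then show ?case by simp
next
  case (step a a')
  show ?case
  proof (cases "a = b")
    case True then show ?thesis by simp
  next
    case False
    have ab: "(\<lambda>a b. T a = Some b)\<^sup>*\<^sup>* a b" using step(1,2) by (meson converse_rtranclp_into_rtranclp)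
    have "T' a = T a" using step.prems[of a] ab False by simp
    then have "T' a = Some a'" using step(1) by simp
    moreover have "(\<lambda>a b. T' a = Some b)\<^sup>*\<^sup>* a' b"
    proof (rule step.IH)
      fix y assume "(\<lambda>a b. T a = Some b)\<^sup>*\<^sup>* a' y" "(\<lambda>a b. T a = Some b)\<^sup>*\<^sup>* y b" "y \<noteq> b"
      then show "T' y = T y" using step.prems step(1) by (meson converse_rtranclp_into_rtranclp)
    qed
    ultimately show ?thesis by (meson converse_rtranclp_into_rtranclp)
  qed
qed

lemma good_sub: "good E S T \<Longrightarrow> x \<in> S \<Longrightarrow> anc T y x \<Longrightarrow> y \<in> S"
  using anc_cases[of T y x] good_dom[of E S T] by blast

lemma good_ancS: "good E S T \<Longrightarrow> x \<in> S \<Longrightarrow> anc T x y \<Longrightarrow> y \<in> S"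
  using anc_cases2[of T x y] good_par[of E S T] by blast

lemma good_toroot: assumes "good E S T" "x \<in> S" shows "\<exists>r. anc T x r \<and> T r = None"
  using good_root[OF assms(1)] assms(2) by blast

lemma good_toroot': assumes "good E S T" "T x = Some y" shows "\<exists>r. anc T x r \<and> T r = None"
  using good_toroot[OF assms(1) good_dom[OF assms]] .

lemma good_antisym: assumes "good E S T" "anc T x y" "anc T y x" shows "x = y"
proof (cases "x \<in> S")
  case True
  then obtain r where r: "anc T x r" "T r = None" using good_toroot[OF assms(1)] by blast
  show ?thesis using anc_antisym[OF r assms(2,3)] .
next
  case False
  then have "T x = None" using good_out[OF assms(1)] by blast
  then show ?thesis using anc_None assms(2) by metis
qed

lemma good_noself: assumes "good E S T" shows "T x \<noteq> Some x"
proof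
  assume "T x = Some x"
  then obtain r where "anc T x r" "T r = None" using good_toroot'[OF assms] by blast
  then show False using no_self[of T x r] \<open>T x = Some x\<close> by blast
qed

lemma good_same_parent: assumes "good E S T" "T x = Some p" "T y = Some p" "anc T x y" shows "x = y"
proof -
  obtain r where r: "anc T x r" "T r = None" using good_toroot'[OF assms(1,2)] by blast
  show ?thesis using same_parent[OF r assms(2-4)] .
qed

lemma good_cong:
  assumes "good E S T" "\<And>a b. a \<in> S \<Longrightarrow> b \<in> S \<Longrightarrow> E a b = E2 a b"
  shows "good E2 S T"
proof -
  obtain r where r: "r \<in> S" "T r = None" "\<And>x. x \<in> S \<Longrightarrow> anc T x r" using good_root[OF assms(1)] by blast
  show ?thesis
proof (rule goodI[where r=r])
  show "\<And>x. x \<notin> S \<Longrightarrow> T x = None" using good_out[OF assms(1)] by blast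
  show "\<And>x y. T x = Some y \<Longrightarrow> y \<in> S" using good_par[OF assms(1)] by blast
  show "r \<in> S" "T r = None" "\<And>x. x \<in> S \<Longrightarrow> anc T x r" by (fact r)+
  show "anc T a b \<or> anc T b a" if "a \<in> S" "b \<in> S" "E2 a b" for a b
    using good_edge[OF assms(1) that(1,2)] assms(2)[OF that(1,2)] that(3) by blast
  show "connected_on E2 (subtree T x)" if x: "x \<in> S" for x
  proof -
    have sub: "subtree T x \<subseteq> S" using good_sub[OF assms(1) x] by (auto simp: subtree_anc)
    have "(\<lambda>a b. E a b \<and> a \<in> subtree T x \<and> b \<in> subtree T x) = (\<lambda>a b. E2 a b \<and> a \<in> subtree T x \<and> b \<in> subtree T x)"
      using assms(2) sub by blast
    then have "reach_in E (subtree T x) = reach_in E2 (subtree T x)" unfolding reach_in_def by simp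
    then show ?thesis using good_conn[OF assms(1) x] unfolding connected_on_def by simp
  qed
qed
qed




definition addroot :: "'a \<Rightarrow> 'a set \<Rightarrow> ('a \<Rightarrow> 'a option) \<Rightarrow> ('a \<Rightarrow> 'a option)" where
  "addroot x S T = (\<lambda>y. if y = x then None else if y \<in> S \<and> T y = None then Some x else T y)"

lemma addroot_anc1:
  assumes "good E S T" "x \<notin> S" "anc T a b" shows "anc (addroot x S T) a b"
  using assms(3) unfolding anc_def
proof (induction rule: rtranclp_induct)
  case (step y z)
  have "y \<in> S" using good_dom[OF assms(1) step(2)] .
  then have "addroot x S T y = Some z" using step(2) assms(2) by (auto simp: addroot_def)
  then show ?case using step(3) by (meson rtranclp.rtrancl_into_rtrancl)
qed simp

lemma addroot_anc2:
  assumes "good E S T" "x \<notin> S" "anc (addroot x S T) a b" "b \<noteq> x" shows "anc T a b"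
  using assms(3,4) unfolding anc_def
proof (induction rule: converse_rtranclp_induct)
  case (step a a')
  have ih: "(\<lambda>a b. T a = Some b)\<^sup>*\<^sup>* a' b" using step by blast
  have "a' \<noteq> x"
  proof
    assume "a' = x"
    then have "anc (addroot x S T) x b" using step(2) by (simp add: anc_def)
    moreover have "addroot x S T x = None" by (simp add: addroot_def)
    ultimately have "x = b" using anc_None by metis
    then show False using step(4) by simp
  qed
  then have "T a = Some a'" using step(1) by (auto simp: addroot_def split: if_splits)
  then show ?case using ih by (meson converse_rtranclp_into_rtranclp)
qed simp

lemma addroot_good:
  assumes g: "good E S T" and x: "x \<notin> S" and c: "connected_on E (insert x S)"
  shows "good E (insert x S) (addroot x S T)"
proof -
  let ?T = "addroot x S T"
  obtain r where r: "r \<in> S" "T r = None" "\<And>y. y \<in> S \<Longrightarrow> anc T y r" using good_root[OF g] by blast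
  have tox: "anc ?T y x" if "y \<in> insert x S" for y
  proof (cases "y = x")
    case False
    then have "anc ?T y r" using addroot_anc1[OF g x r(3)] that by blast
    moreover have "?T r = Some x" using r x by (auto simp: addroot_def)
    ultimately show ?thesis using anc_step2 by metis
  qed simp
  have subeq: "subtree ?T y = subtree T y" if "y \<noteq> x" for y
    using addroot_anc1[OF g x] addroot_anc2[OF g x _ that] by (auto simp: subtree_anc)
  have subx: "subtree ?T x = insert x S"
  proof
    show "insert x S \<subseteq> subtree ?T x" using tox by (auto simp: subtree_anc)
  next
    show "subtree ?T x \<subseteq> insert x S"
    proof
      fix y assume "y \<in> subtree ?T x"
      then have "anc ?T y x" by (simp add: subtree_anc)
      then have "y = x \<or> (\<exists>p. ?T y = Some p)" using anc_cases by fastforce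
      then show "y \<in> insert x S" using good_out[OF g] good_dom[OF g] by (auto simp: addroot_def split: if_splits)
    qed
  qed
  show ?thesis
  proof (rule goodI[where r=x])
    show "\<And>y. y \<notin> insert x S \<Longrightarrow> ?T y = None" using good_out[OF g] by (auto simp: addroot_def)
    show "\<And>a b. ?T a = Some b \<Longrightarrow> b \<in> insert x S" using good_par[OF g] by (auto simp: addroot_def split: if_splits)
    show "x \<in> insert x S" by simp
    show "?T x = None" by (simp add: addroot_def)
    show "\<And>y. y \<in> insert x S \<Longrightarrow> anc ?T y x" by (fact tox)
    show "anc ?T a b \<or> anc ?T b a" if "a \<in> insert x S" "b \<in> insert x S" "E a b" for a b
    proof (cases "a = x \<or> b = x")
      case True then show ?thesis using tox that by blast
    next
      case False
      then have "anc T a b \<or> anc T b a" using good_edge[OF g] that by blast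
      then show ?thesis using addroot_anc1[OF g x] by blast
    qed
    show "connected_on E (subtree ?T y)" if "y \<in> insert x S" for y
    proof (cases "y = x")
      case True then show ?thesis using subx c by simp
    next
      case False then show ?thesis using subeq[OF False] good_conn[OF g] that by simp
    qed
  qed
qed

lemma conn_univ:
  assumes "t \<in> B" "\<And>y. y \<in> B \<Longrightarrow> y \<noteq> t \<Longrightarrow> E t y \<and> E y t"
  shows "connected_on E B"
  unfolding connected_on_def
proof (intro conjI ballI)
  show "B \<noteq> {}" using assms(1) by blast
  fix a b assume ab: "a \<in> B" "b \<in> B"
  have "reach_in E B a t"
    using assms ab(1) reach_in_edge[of E a t B] by (cases "a = t") (auto simp: reach_in_def)
  moreover have "reach_in E B t b"
    using assms ab(2) reach_in_edge[of E t b B] by (cases "b = t") (auto simp: reach_in_def)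
  ultimately show "reach_in E B a b" by (rule reach_in_trans)
qed

definition colorable :: "'b set \<Rightarrow> ('b \<Rightarrow> 'b \<Rightarrow> bool) \<Rightarrow> nat \<Rightarrow> bool" where
  "colorable W A k \<longleftrightarrow> (\<exists>c :: 'b \<Rightarrow> nat. (\<forall>x\<in>W. c x < k) \<and> (\<forall>x\<in>W. \<forall>y\<in>W. A x y \<longrightarrow> c x \<noteq> c y))"

lemma chrom_le: "colorable W A k \<Longrightarrow> chromatic_number W A \<le> k"
  unfolding chromatic_number_def colorable_def by (rule Least_le)

lemma chrom_col: "colorable W A k \<Longrightarrow> colorable W A (chromatic_number W A)"
  unfolding chromatic_number_def colorable_def by (rule LeastI_ex) blast

lemma colorable_finite:
  assumes "finite W" "\<And>x. x \<in> W \<Longrightarrow> \<not> A x x"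
  shows "colorable W A (card W)"
proof -
  obtain f :: "_ \<Rightarrow> nat" and n where f: "f ` W = {i. i < n}" "inj_on f W"
    using finite_imp_inj_to_nat_seg[OF assms(1)] by blast
  have "n = card W" using f card_image[OF f(2)] by simp
  then have "\<forall>x\<in>W. f x < card W" using f(1) by blast
  moreover have "\<forall>x\<in>W. \<forall>y\<in>W. A x y \<longrightarrow> f x \<noteq> f y"
    using f(2) assms(2) unfolding inj_on_def by metis
  ultimately show ?thesis unfolding colorable_def by blast
qed

lemma finite_trees:
  assumes "finite S"
  shows "finite {T :: 'a \<Rightarrow> 'a option. (\<forall>x. x \<notin> S \<longrightarrow> T x = None) \<and> (\<forall>x y. T x = Some y \<longrightarrow> y \<in> S)}"
    (is "finite ?W")
proof -
  let ?g = "\<lambda>T :: 'a \<Rightarrow> 'a option. {(a, b). T a = Some b}"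
  have "inj_on ?g ?W"
  proof (rule inj_onI)
    fix T1 T2 assume "?g T1 = ?g T2" "T1 \<in> ?W" "T2 \<in> ?W"
    then have "\<And>a b. T1 a = Some b \<longleftrightarrow> T2 a = Some b" by (simp add: set_eq_iff)
    then show "T1 = T2" by (metis not_None_eq ext)
  qed
  moreover have "?g ` ?W \<subseteq> Pow (S \<times> S)" by auto
  moreover have "finite (Pow (S \<times> S))" using assms by simp
  ultimately show ?thesis by (meson finite_imageD finite_subset)
qed




lemma conn_cong:
  assumes "\<And>a b. a \<in> B \<Longrightarrow> b \<in> B \<Longrightarrow> E1 a b = E2 a b"
  shows "connected_on E1 B = connected_on E2 B"
proof -
  have "(\<lambda>a b. E1 a b \<and> a \<in> B \<and> b \<in> B) = (\<lambda>a b. E2 a b \<and> a \<in> B \<and> b \<in> B)"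
    using assms by blast
  then have "reach_in E1 B = reach_in E2 B" unfolding reach_in_def by simp
  then show ?thesis unfolding connected_on_def by simp
qed

locale tw =
  fixes V :: "'a set" and E :: "'a \<Rightarrow> 'a \<Rightarrow> bool" and v v' :: 'a
  assumes sg: "simple_graph V E" and vV: "v \<in> V" and univ: "\<forall>x\<in>V. x \<noteq> v \<longrightarrow> E v x"
    and v'V: "v' \<notin> V"
begin

abbreviation EE where "EE \<equiv> add_twin E v v'"
abbreviation VV where "VV \<equiv> insert v' V"

lemma finV: "finite V" using sg by (simp add: simple_graph_def)
lemma E_sym: "E a b \<Longrightarrow> E b a" using sg by (simp add: simple_graph_def)
lemma E_in: "E a b \<Longrightarrow> a \<in> V \<and> b \<in> V" using sg by (simp add: simple_graph_def)
lemma E_irr: "\<not> E a a" using sg by (simp add: simple_graph_def)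
lemma vv': "v \<noteq> v'" using vV v'V by blast
lemma E_v': "\<not> E v' a" "\<not> E a v'" using E_in v'V by blast+

lemma EE_V: "a \<in> V \<Longrightarrow> b \<in> V \<Longrightarrow> EE a b = E a b"
  using v'V by (auto simp: add_twin_def)
lemma EE_sym: "EE a b \<Longrightarrow> EE b a"
  using E_sym by (auto simp: add_twin_def)
lemma EE_univ_v': "x \<in> V \<Longrightarrow> EE v' x"
  using univ by (auto simp: add_twin_def)
lemma EE_univ_v: "x \<in> VV \<Longrightarrow> x \<noteq> v \<Longrightarrow> EE v x"
  using univ by (auto simp: add_twin_def)
lemma EE_in: "EE a b \<Longrightarrow> a \<in> VV \<and> b \<in> VV"
  using E_in vV by (auto simp: add_twin_def)
lemma EE_irr: "\<not> EE a a"
  using E_irr E_v' vv' by (auto simp: add_twin_def)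
lemma twin: "b \<noteq> v \<Longrightarrow> b \<noteq> v' \<Longrightarrow> EE v b = EE v' b"
  using E_v' vv' by (auto simp: add_twin_def)
lemma EE_vv': "EE v v'" "EE v' v" by (auto simp: add_twin_def)

lemma UA:
  assumes g: "good EE VV T" and t: "t \<in> VV" "\<And>x. x \<in> VV \<Longrightarrow> x \<noteq> t \<Longrightarrow> EE t x"
    and ty: "anc T t y" "t \<noteq> y" and xy: "T x = Some y"
  shows "anc T t x"
proof (cases "x = t")
  case False
  from anc_cases2[OF ty(1)] ty(2) obtain z where z: "T z = Some y" "anc T t z" by blast
  have "x \<in> VV" using good_dom[OF g xy] .
  then have "EE t x" using t(2) False by blast
  then have "anc T t x \<or> anc T x t" using good_edge[OF g t(1) \<open>x \<in> VV\<close>] by blast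
  then show ?thesis
  proof
    assume "anc T x t"
    then have "anc T x z" using anc_trans z(2) by metis
    then have "x = z" using good_same_parent[OF g xy z(1)] by blast
    then show ?thesis using z(2) by simp
  qed
qed simp

lemma UAv: "good EE VV T \<Longrightarrow> anc T v y \<Longrightarrow> v \<noteq> y \<Longrightarrow> T x = Some y \<Longrightarrow> anc T v x"
  using UA[of T v y x] vV EE_univ_v by blast

lemma UAv': "good EE VV T \<Longrightarrow> anc T v' y \<Longrightarrow> v' \<noteq> y \<Longrightarrow> T x = Some y \<Longrightarrow> anc T v' x"
  using UA[of T v' y x] EE_univ_v' by blast

definition K :: "('a \<Rightarrow> 'a option) \<Rightarrow> ('a \<Rightarrow> 'a option)" where
  "K T = (\<lambda>x. if x = v' then None else if T x = Some v' then T v' else T x)"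

lemma K_anc1:
  assumes g: "good EE VV T" and "anc T a b" "a \<noteq> v'" "b \<noteq> v'"
  shows "anc (K T) a b"
proof -
  have "(a \<noteq> v' \<longrightarrow> anc (K T) a b) \<and> (a = v' \<longrightarrow> (\<forall>p. T a = Some p \<longrightarrow> anc (K T) p b))"
    using assms(2) unfolding anc_def
  proof (induction rule: converse_rtranclp_induct)
    case base then show ?case using assms(4) by simp
  next
    case (step x y)
    have ny: "T v' \<noteq> Some v'" using good_noself[OF g] .
    show ?case
    proof (intro conjI impI allI)
      assume "x \<noteq> v'"
      show "(\<lambda>a b. K T a = Some b)\<^sup>*\<^sup>* x b"
      proof (cases "y = v'")
        case False
        then have "K T x = Some y" using step(1) \<open>x \<noteq> v'\<close> by (simp add: K_def)
        then show ?thesis using step(3) False by (meson converse_rtranclp_into_rtranclp)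
      next
        case True
        have "anc T v' b" using step(2) True by (simp add: anc_def)
        from anc_cases[OF this] assms(4) obtain p where p: "T v' = Some p" by auto
        then have "K T x = Some p" using step(1) True \<open>x \<noteq> v'\<close> by (simp add: K_def)
        moreover have "(\<lambda>a b. K T a = Some b)\<^sup>*\<^sup>* p b" using step(3) True p by blast
        ultimately show ?thesis by (meson converse_rtranclp_into_rtranclp)
      qed
    next
      fix p assume "x = v'" "T x = Some p"
      then have "p = y" "y \<noteq> v'" using step(1) ny by auto
      then show "(\<lambda>a b. K T a = Some b)\<^sup>*\<^sup>* p b" using step(3) by blast
    qed
  qed
  then show ?thesis using assms(3) by blast
qed

lemma K_step: "K T a = Some b \<Longrightarrow> anc T a b"
  unfolding K_def
  by (auto split: if_splits intro: anc_step[OF _ anc_step[OF _ anc_refl]] anc_step[OF _ anc_refl])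

lemma K_anc2: "anc (K T) a b \<Longrightarrow> anc T a b"
  unfolding anc_def[of "K T"]
proof (induction rule: rtranclp_induct)
  case (step y z) then show ?case using K_step anc_trans by metis
qed simp

lemma K_nov': "good EE VV T \<Longrightarrow> K T a = Some b \<Longrightarrow> b \<noteq> v'"
  using good_noself[of EE VV T] unfolding K_def by (auto split: if_splits)

lemma K_v': "K T v' = None" by (simp add: K_def)

lemma K_sub: "good EE VV T \<Longrightarrow> x \<noteq> v' \<Longrightarrow> subtree (K T) x = subtree T x - {v'}"
proof -
  assume g: "good EE VV T" and x: "x \<noteq> v'"
  have "y \<noteq> v'" if "anc (K T) y x" for y
  proof
    assume "y = v'"
    then have "v' = x" using that anc_None[of "K T" v' x] K_v' by simp
    then show False using x by simp
  qed
  then show ?thesis using K_anc1[OF g _ _ x] K_anc2 by (auto simp: subtree_anc)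
qed

lemma twin_conn:
  assumes c: "connected_on EE A" and A: "v \<in> A" "v' \<in> A"
  shows "connected_on EE (A - {v'})"
proof -
  define f where "f a = (if a = v' then v else a)" for a
  have fA: "a \<in> A \<Longrightarrow> f a \<in> A - {v'}" for a using A vv' by (auto simp: f_def)
  have main: "reach_in EE (A - {v'}) (f a) (f b)" if "reach_in EE A a b" "a \<in> A" for a b
    using that(1) unfolding reach_in_def[of EE A]
  proof (induction rule: rtranclp_induct)
    case base then show ?case by (simp add: reach_in_def)
  next
    case (step y z)
    then have yz: "EE y z" "y \<in> A" "z \<in> A" by auto
    show ?case
    proof (cases "f y = f z")
      case True then show ?thesis using step(3) by simp
    next
      case False
      have "EE (f y) (f z)"
      proof (cases "y = v'")
        case True
        then have "z \<noteq> v" "z \<noteq> v'" using False EE_irr yz(1) by (auto simp: f_def)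
        then show ?thesis using True yz(1) twin by (simp add: f_def)
      next
        case y: False
        show ?thesis
        proof (cases "z = v'")
          case True
          then have "y \<noteq> v" using False y by (simp add: f_def)
          then have "EE v y" using twin[of y] y EE_sym yz(1) True by metis
          then show ?thesis using True y EE_sym by (simp add: f_def)
        next
          case False then show ?thesis using y yz(1) by (simp add: f_def)
        qed
      qed
      then show ?thesis using step(3) fA yz(2,3) reach_in_step by metis
    qed
  qed
  show ?thesis unfolding connected_on_def
  proof (intro conjI ballI)
    show "A - {v'} \<noteq> {}" using A vv' by blast
    fix a b assume "a \<in> A - {v'}" "b \<in> A - {v'}"
    then have "reach_in EE A a b" "f a = a" "f b = b" using c unfolding connected_on_def f_def by auto
    then show "reach_in EE (A - {v'}) a b" using main \<open>a \<in> A - {v'}\<close> by force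
  qed
qed

end




context tw begin

lemma K_good:
  assumes g: "good EE VV T" and vf: "anc T v v'"
  shows "good E V (K T)"
proof -
  obtain r where r: "r \<in> VV" "T r = None" "\<And>x. x \<in> VV \<Longrightarrow> anc T x r" using good_root[OF g] by blast
  obtain c where c: "T c = Some v'" "anc T v c" using anc_cases2[OF vf] vv' by blast
  have cV: "c \<in> V" using good_dom[OF g c(1)] good_noself[OF g, of c] c(1) by auto
  have root: "\<exists>\<rho>\<in>V. K T \<rho> = None \<and> (\<forall>x\<in>V. anc (K T) x \<rho>)"
  proof (cases "r = v'")
    case False
    then have "r \<in> V" "K T r = None" using r(1,2) by (auto simp: K_def)
    moreover have "\<forall>x\<in>V. anc (K T) x r" using K_anc1[OF g r(3) _ False] v'V by blast
    ultimately show ?thesis by blast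
  next
    case True
    have "K T c = None" using c(1) True r(2) cV v'V by (auto simp: K_def)
    moreover have "anc (K T) x c" if x: "x \<in> V" for x
    proof -
      have xv: "x \<noteq> v'" using x v'V by blast
      have "anc T x v'" using r(3) x True by blast
      from anc_cases2[OF this] xv obtain c' where c': "T c' = Some v'" "anc T x c'" by blast
      have "anc T v c'" using UAv[OF g vf vv' c'(1)] .
      then have "anc T c c' \<or> anc T c' c" using anc_det c(2) by metis
      then have "c = c'" using good_same_parent[OF g c(1) c'(1)] good_same_parent[OF g c'(1) c(1)] by metis
      then show ?thesis using K_anc1[OF g c'(2) xv] cV v'V by blast
    qed
    ultimately show ?thesis using cV by blast
  qed
  then obtain \<rho> where \<rho>: "\<rho> \<in> V" "K T \<rho> = None" "\<And>x. x \<in> V \<Longrightarrow> anc (K T) x \<rho>" by blast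
  show ?thesis
  proof (rule goodI[where r=\<rho>])
    show "K T x = None" if "x \<notin> V" for x
    proof (cases "x = v'")
      case False
      then have "T x = None" using good_out[OF g] that by blast
      then show ?thesis by (simp add: K_def)
    qed (simp add: K_def)
    show "y \<in> V" if "K T x = Some y" for x y
    proof -
      have "y \<noteq> v'" using K_nov'[OF g that] .
      moreover have "y \<in> VV" using that good_par[OF g] by (auto simp: K_def split: if_splits)
      ultimately show ?thesis by blast
    qed
    show "\<rho> \<in> V" "K T \<rho> = None" "\<And>x. x \<in> V \<Longrightarrow> anc (K T) x \<rho>" by (fact \<rho>)+
    show "anc (K T) a b \<or> anc (K T) b a" if "a \<in> V" "b \<in> V" "E a b" for a b
    proof -
      have "EE a b" using EE_V that by blast
      then have "anc T a b \<or> anc T b a" using good_edge[OF g] that by blast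
      moreover have "a \<noteq> v'" "b \<noteq> v'" using that v'V by auto
      ultimately show ?thesis using K_anc1[OF g] by blast
    qed
    show "connected_on E (subtree (K T) x)" if x: "x \<in> V" for x
    proof -
      have xv: "x \<noteq> v'" using x v'V by blast
      have sub: "subtree T x \<subseteq> VV" using good_sub[OF g] x by (auto simp: subtree_anc)
      have c1: "connected_on EE (subtree T x)" using good_conn[OF g] x by blast
      have c2: "connected_on EE (subtree T x - {v'})"
      proof (cases "v' \<in> subtree T x")
        case True
        then have "v \<in> subtree T x" using vf anc_trans by (metis mem_Collect_eq subtree_anc)
        then show ?thesis using twin_conn[OF c1 _ True] by blast
      next
        case False then show ?thesis using c1 by simp
      qed
      have "connected_on EE (subtree T x - {v'}) = connected_on E (subtree T x - {v'})"
        by (rule conn_cong) (use sub EE_V in auto)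
      then show ?thesis using c2 K_sub[OF g xv] by simp
    qed
  qed
qed

definition sw :: "'a \<Rightarrow> 'a" where
  "sw x = (if x = v then v' else if x = v' then v else x)"

definition swT :: "('a \<Rightarrow> 'a option) \<Rightarrow> ('a \<Rightarrow> 'a option)" where
  "swT T = (\<lambda>x. map_option sw (T (sw x)))"

lemma sw_sw[simp]: "sw (sw x) = x" by (simp add: sw_def)
lemma sw_inj: "sw a = sw b \<longleftrightarrow> a = b" by (metis sw_sw)
lemma sw_VV: "sw x \<in> VV \<longleftrightarrow> x \<in> VV" using vV by (auto simp: sw_def)
lemma swT_swT[simp]: "swT (swT T) = T"
  by (rule ext) (simp add: swT_def option.map_comp comp_def option.map_ident)
lemma sw_v[simp]: "sw v = v'" "sw v' = v" using vv' by (auto simp: sw_def)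

lemma swT_Some: "swT T a = Some b \<longleftrightarrow> T (sw a) = Some (sw b)"
  by (cases "T (sw a)") (auto simp: swT_def sw_inj)

lemma twin': "a \<noteq> v \<Longrightarrow> a \<noteq> v' \<Longrightarrow> EE a v = EE a v'"
  using twin[of a] EE_sym by blast

lemma sw_other: "x \<noteq> v \<Longrightarrow> x \<noteq> v' \<Longrightarrow> sw x = x" by (simp add: sw_def)

lemma EE_sw: "EE (sw a) (sw b) = EE a b"
proof -
  have "a = v \<or> a = v' \<or> (a \<noteq> v \<and> a \<noteq> v')" by blast
  moreover have "b = v \<or> b = v' \<or> (b \<noteq> v \<and> b \<noteq> v')" by blast
  ultimately show ?thesis
    using EE_irr[of v] EE_irr[of v'] EE_vv' twin[of b] twin'[of a] sw_other[of a] sw_other[of b]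
    by (elim disjE conjE) simp_all
qed

lemma swT_anc1: "anc T a b \<Longrightarrow> anc (swT T) (sw a) (sw b)"
  unfolding anc_def[of T]
proof (induction rule: rtranclp_induct)
  case (step y z)
  have "swT T (sw y) = Some (sw z)" using step(2) by (simp add: swT_Some)
  then show ?case using step(3) anc_step2 by metis
qed simp

lemma swT_anc: "anc (swT T) a b \<longleftrightarrow> anc T (sw a) (sw b)"
  using swT_anc1[of T "sw a" "sw b"] swT_anc1[of "swT T" a b] by auto

lemma sw_image: "sw ` B = {y. sw y \<in> B}"
proof
  show "sw ` B \<subseteq> {y. sw y \<in> B}" by auto
  show "{y. sw y \<in> B} \<subseteq> sw ` B"
  proof
    fix y assume "y \<in> {y. sw y \<in> B}"
    then show "y \<in> sw ` B" using image_eqI[of y sw "sw y" B] by simp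
  qed
qed

lemma swT_sub: "subtree (swT T) x = sw ` subtree T (sw x)"
  unfolding sw_image by (simp add: subtree_anc swT_anc)

lemma conn_sw: assumes "connected_on EE B" shows "connected_on EE (sw ` B)"
proof -
  have r: "reach_in EE (sw ` B) (sw a) (sw b)" if "reach_in EE B a b" for a b
    using that unfolding reach_in_def[of EE B]
  proof (induction rule: rtranclp_induct)
    case base then show ?case by (simp add: reach_in_def)
  next
    case (step y z)
    then have "EE (sw y) (sw z)" "sw y \<in> sw ` B" "sw z \<in> sw ` B" using EE_sw by auto
    then show ?case using step(3) reach_in_step by metis
  qed
  show ?thesis using assms r unfolding connected_on_def by auto
qed

lemma swT_good: assumes g: "good EE VV T" shows "good EE VV (swT T)"
proof -
  obtain r where r: "r \<in> VV" "T r = None" "\<And>x. x \<in> VV \<Longrightarrow> anc T x r" using good_root[OF g] by blast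
  show ?thesis
  proof (rule goodI[where r="sw r"])
    show "swT T x = None" if "x \<notin> VV" for x
    proof -
      have "sw x \<notin> VV" using that sw_VV by blast
      then show ?thesis using good_out[OF g, of "sw x"] by (simp add: swT_def)
    qed
    show "y \<in> VV" if "swT T x = Some y" for x y
      using that good_par[OF g] sw_VV by (metis swT_Some)
    show "sw r \<in> VV" using r(1) sw_VV by blast
    show "swT T (sw r) = None" using r(2) by (simp add: swT_def)
    show "anc (swT T) x (sw r)" if "x \<in> VV" for x
      using r(3)[of "sw x"] that sw_VV by (simp add: swT_anc)
    show "anc (swT T) a b \<or> anc (swT T) b a" if "a \<in> VV" "b \<in> VV" "EE a b" for a b
      using good_edge[OF g, of "sw a" "sw b"] that sw_VV EE_sw by (simp add: swT_anc)
    show "connected_on EE (subtree (swT T) x)" if "x \<in> VV" for x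
      using conn_sw[OF good_conn[OF g, of "sw x"]] that sw_VV by (simp add: swT_sub)
  qed
qed

end




lemma rot_at_w: "rotate E T u w w = T u" by (simp add: rotate_def)
lemma rot_at_u: "u \<noteq> w \<Longrightarrow> rotate E T u w u = Some w" by (simp add: rotate_def)
lemma rot_ch: "x \<noteq> w \<Longrightarrow> x \<noteq> u \<Longrightarrow> T x = Some w \<Longrightarrow>
   rotate E T u w x = (if \<exists>y\<in>subtree T x. E u y then Some u else Some w)"
  by (simp add: rotate_def)
lemma rot_oth: "x \<noteq> w \<Longrightarrow> x \<noteq> u \<Longrightarrow> T x \<noteq> Some w \<Longrightarrow> rotate E T u w x = T x"
  by (simp add: rotate_def)

lemma good_nocyc: "good E S T \<Longrightarrow> T a = Some b \<Longrightarrow> anc T b a \<Longrightarrow> False"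
  using good_antisym[of E S T a b] anc_step[of T a b b] good_noself[of E S T a] by auto

lemma good_nocyc2: "good E S T \<Longrightarrow> T a = Some b \<Longrightarrow> T b = Some a \<Longrightarrow> False"
  using good_nocyc[of E S T a b] anc_step[of T b a a] by auto

lemma ancs_fin: "good E S T \<Longrightarrow> finite S \<Longrightarrow> finite (ancs T x)"
proof -
  assume g: "good E S T" and f: "finite S"
  have "ancs T x \<subseteq> insert x S"
  proof
    fix y assume "y \<in> ancs T x"
    then have "anc T x y" by (simp add: ancs_def)
    then show "y \<in> insert x S" using anc_cases2[of T x y] good_par[OF g] by blast
  qed
  then show ?thesis using f finite_subset by blast
qed

definition ancso :: "('a \<Rightarrow> 'a option) \<Rightarrow> 'a option \<Rightarrow> 'a set" where
  "ancso T p = (case p of None \<Rightarrow> {} | Some q \<Rightarrow> ancs T q)"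

lemma ancs_unf: "ancs T x = insert x (ancso T (T x))"
  by (cases "T x") (auto simp: ancso_def ancs_Some ancs_None)

lemma ancso_agree: assumes "\<And>y. y \<in> ancso T p \<Longrightarrow> T' y = T y" shows "ancso T' p = ancso T p"
proof (cases p)
  case (Some q)
  have "ancs T' q = ancs T q" using assms Some by (intro ancs_agree) (simp add: ancso_def)
  then show ?thesis using Some by (simp add: ancso_def)
qed (simp add: ancso_def)


lemma ancso_anc: "y \<in> ancso T (T x) \<Longrightarrow> anc T x y"
  by (cases "T x") (auto simp: ancso_def ancs_def intro: anc_step)

context tw begin

definition vf where "vf T \<longleftrightarrow> anc T v v'"

lemma finVV: "finite VV" using finV by simp

lemma child_v': assumes g: "good EE VV T" and vf: "anc T v v'" and x: "T x = Some v'" "T c = Some v'" "anc T v c"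
  shows "x = c"
proof -
  have "anc T v x" using UAv[OF g vf vv' x(1)] .
  then have "anc T x c \<or> anc T c x" using anc_det[OF _ x(3)] by blast
  then show ?thesis using good_same_parent[OF g x(1) x(2)] good_same_parent[OF g x(2) x(1)] by blast
qed

lemma case_b:
  assumes g: "good EE VV T" and vf: "anc T v v'" and tv: "T v = Some v'"
  shows "rotate EE T v' v = swT T"
proof (rule ext)
  fix x
  have tv': "T v' \<noteq> Some v" "T v' \<noteq> Some v'" using good_nocyc2[OF g tv] good_noself[OF g] by auto
  have mtv': "map_option sw (T v') = T v'"
    using tv' by (cases "T v'") (auto simp: sw_def)
  consider "x = v" | "x = v'" | "x \<noteq> v" "x \<noteq> v'" by blast
  then show "rotate EE T v' v x = swT T x"
  proof cases
    case 1 then show ?thesis using mtv' by (simp add: rotate_def swT_def)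
  next
    case 2 then show ?thesis using tv vv' by (simp add: rotate_def swT_def)
  next
    case 3
    have swx: "sw x = x" using 3 by (simp add: sw_def)
    show ?thesis
    proof (cases "T x = Some v")
      case True
      have "x \<in> V" using good_dom[OF g True] 3 by blast
      moreover have "x \<in> subtree T x" by (simp add: subtree_anc)
      ultimately have "\<exists>y\<in>subtree T x. EE v' y" using EE_univ_v'[of x] by blast
      then show ?thesis using True 3 swx by (simp add: rotate_def swT_def)
    next
      case False
      have "T x \<noteq> Some v'" using child_v'[OF g vf _ tv anc_refl] 3 by blast
      then have "map_option sw (T x) = T x" using False by (cases "T x") (auto simp: sw_def)
      then show ?thesis using False 3 swx by (simp add: rotate_def swT_def)
    qed
  qed
qed

lemma case_c:
  assumes g: "good EE VV T" and vf: "anc T v v'" and tv': "T v' = Some u"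
    and T': "T' = rotate EE T u v'"
  shows "anc T' v v' \<and> K T' = K T \<and> card (ancs T v') = Suc (card (ancs T' v'))"
proof -
  have uv: "u \<noteq> v"
  proof
    assume "u = v"
    then have "anc T v' v" using anc_step[OF tv' anc_refl[of T u]] by simp
    then show False using good_antisym[OF g vf] vv' by blast
  qed
  have uv': "u \<noteq> v'" using good_noself[OF g] tv' by blast
  have uVV: "u \<in> VV" using good_par[OF g tv'] .
  obtain c where c: "T c = Some v'" "anc T v c" using anc_cases2[OF vf] vv' by blast
  have cv': "c \<noteq> v'" using good_noself[OF g] c(1) by blast
  have cu: "c \<noteq> u" using good_nocyc2[OF g c(1)] tv' by blast
  have onlyc: "T x = Some v' \<Longrightarrow> x = c" for x using child_v'[OF g vf _ c] by blast
  have EEuv: "EE u v" using EE_univ_v[OF uVV uv] EE_sym by blast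
  have T'v': "T' v' = T u" using T' by (simp add: rot_at_w)
  have T'u: "T' u = Some v'" using T' uv' by (simp add: rot_at_u)
  have T'c: "T' c = Some u"
  proof -
    have "\<exists>y\<in>subtree T c. EE u y" using c(2) EEuv by (auto simp: subtree_anc)
    then show ?thesis using T' rot_ch[of c v' u T EE, OF cv' cu c(1)] by simp
  qed
  have T'o: "T' x = T x" if "x \<noteq> v'" "x \<noteq> u" "x \<noteq> c" for x
    using T' rot_oth[OF that(1,2)] onlyc that(3) by blast
  have Tu: "T u \<noteq> Some v'" using good_nocyc2[OF g tv'] by blast
  have KK: "K T' = K T"
  proof (rule ext)
    fix x
    consider "x = v'" | "x = u" | "x = c" | "x \<noteq> v'" "x \<noteq> u" "x \<noteq> c" by blast
    then show "K T' x = K T x"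
    proof cases
      case 1 then show ?thesis by (simp add: K_def)
    next
      case 2 then show ?thesis using T'u T'v' Tu uv' by (simp add: K_def)
    next
      case 3 then show ?thesis using T'c c(1) tv' cv' uv' by (simp add: K_def)
    next
      case 4
      have "T x \<noteq> Some v'" using onlyc 4(3) by blast
      then show ?thesis using T'o[OF 4] 4 by (simp add: K_def)
    qed
  qed
  have "anc T' v c"
  proof (rule path_agree[OF c(2)])
    fix y assume y: "anc T v y" "anc T y c" "y \<noteq> c"
    have "y \<noteq> v'"
    proof
      assume "y = v'" then show False using good_nocyc[OF g c(1)] y(2) by simp
    qed
    moreover have "y \<noteq> u"
    proof
      assume "y = u"
      have "anc T c u" using anc_step[OF c(1) anc_step[OF tv' anc_refl[of T u]]] .
      moreover have "anc T u c" using y(2) \<open>y = u\<close> by simp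
      ultimately show False using good_antisym[OF g, of c u] cu by blast
    qed
    ultimately show "T' y = T y" using T'o y(3) by blast
  qed
  then have vfT': "anc T' v v'" using anc_step2[OF anc_step2[of T' v c u] T'u] T'c by blast
  have ag: "ancso T' (T u) = ancso T (T u)"
  proof (rule ancso_agree)
    fix y assume y: "y \<in> ancso T (T u)"
    then have uy: "anc T u y" by (rule ancso_anc)
    have "y \<noteq> u" "y \<noteq> v'" "y \<noteq> c"
    proof -
      obtain q where q: "T u = Some q" "anc T q y" using y by (cases "T u") (auto simp: ancso_def ancs_def)
      show "y \<noteq> u" using good_nocyc[OF g q(1)] q(2) by blast
      show "y \<noteq> v'"
      proof
        assume "y = v'"
        then have "anc T u v'" using uy by simp
        then show False using good_nocyc[OF g tv'] by blast
      qed
      show "y \<noteq> c"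
      proof
        assume "y = c"
        then have "anc T u c" using uy by simp
        moreover have "anc T c u" using anc_step[OF c(1) anc_step[OF tv' anc_refl[of T u]]] .
        ultimately show False using good_antisym[OF g] cu by blast
      qed
    qed
    then show "T' y = T y" using T'o by blast
  qed
  have "ancs T v' = insert v' (insert u (ancso T (T u)))" using tv' ancs_unf[of T v'] ancs_unf[of T u] by (simp add: ancso_def)
  moreover have "ancs T' v' = insert v' (ancso T (T u))" using T'v' ancs_unf[of T' v'] ag by simp
  moreover have "u \<notin> ancso T (T u)" "v' \<notin> ancso T (T u)"
  proof -
    show "u \<notin> ancso T (T u)"
    proof
      assume "u \<in> ancso T (T u)"
      then obtain q where q: "T u = Some q" "anc T q u" by (cases "T u") (auto simp: ancso_def ancs_def)
      then show False using good_nocyc[OF g] by blast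
    qed
    show "v' \<notin> ancso T (T u)"
    proof
      assume "v' \<in> ancso T (T u)"
      then have "anc T u v'" by (rule ancso_anc)
      then show False using good_nocyc[OF g tv'] by blast
    qed
  qed
  moreover have "finite (ancso T (T u))"
    using ancs_fin[OF g finVV, of u] ancs_unf[of T u] by (metis finite_insert)
  ultimately have "card (ancs T v') = Suc (card (ancs T' v'))" using uv' by simp
  then show ?thesis using vfT' KK by blast
qed

end




context tw begin

lemma case_d:
  assumes g: "good EE VV T" and vf: "anc T v v'" and tc: "T c = Some v'" and cv: "c \<noteq> v"
    and T': "T' = rotate EE T v' c"
  shows "anc T' v v' \<and> K T' = K T \<and> card (ancs T' v') = Suc (card (ancs T v'))"
proof -
  have vc: "anc T v c" using UAv[OF g vf vv' tc] .
  have cv': "c \<noteq> v'" using good_noself[OF g] tc by blast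
  have onlyc: "T x = Some v' \<Longrightarrow> x = c" for x using child_v'[OF g vf _ tc vc] by blast
  have T'c: "T' c = T v'" using T' by (simp add: rot_at_w)
  have T'v': "T' v' = Some c" using T' cv' by (simp add: rot_at_u)
  have T'ch: "T' x = Some v'" if x: "T x = Some c" for x
  proof -
    have xc: "x \<noteq> c" using good_noself[OF g] x by blast
    have xv': "x \<noteq> v'" using good_nocyc2[OF g x] tc by blast
    have "x \<in> V" using good_dom[OF g x] xv' by blast
    moreover have "x \<in> subtree T x" by (simp add: subtree_anc)
    ultimately have "\<exists>y\<in>subtree T x. EE v' y" using EE_univ_v'[of x] by blast
    then show ?thesis using T' rot_ch[of x c v' T EE, OF xc xv' x] by simp
  qed
  have T'o: "T' x = T x" if "x \<noteq> v'" "x \<noteq> c" "T x \<noteq> Some c" for x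
    using T' rot_oth[of x c v' T EE, OF that(2,1,3)] by blast
  have Tv': "T v' \<noteq> Some v'" using good_noself[OF g] by blast
  have KK: "K T' = K T"
  proof (rule ext)
    fix x
    consider "x = v'" | "x = c" | "T x = Some c" | "x \<noteq> v'" "x \<noteq> c" "T x \<noteq> Some c" by blast
    then show "K T' x = K T x"
    proof cases
      case 1 then show ?thesis by (simp add: K_def)
    next
      case 2 then show ?thesis using T'c tc Tv' cv' by (simp add: K_def)
    next
      case 3
      have "x \<noteq> v'" using good_nocyc2[OF g 3] tc by blast
      then show ?thesis using T'ch[OF 3] 3 T'v' cv' by (simp add: K_def)
    next
      case 4
      have "T x \<noteq> Some v'" using onlyc 4(2) by blast
      then show ?thesis using T'o[OF 4] 4 by (simp add: K_def)
    qed
  qed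
  from anc_cases2[OF vc] cv obtain x0 where x0: "T x0 = Some c" "anc T v x0" by blast
  have "anc T' v x0"
  proof (rule path_agree[OF x0(2)])
    fix y assume y: "anc T v y" "anc T y x0" "y \<noteq> x0"
    have "y \<noteq> c"
    proof
      assume "y = c" then show False using good_nocyc[OF g x0(1)] y(2) by simp
    qed
    moreover have "y \<noteq> v'"
    proof
      assume "y = v'"
      have "anc T x0 v'" using anc_step[OF x0(1) anc_step[OF tc anc_refl[of T v']]] .
      then show False using good_antisym[OF g, of x0 v'] y(2) \<open>y = v'\<close> good_nocyc2[OF g x0(1)] tc by blast
    qed
    moreover have "T y \<noteq> Some c" using good_same_parent[OF g _ x0(1) y(2)] y(3) by blast
    ultimately show "T' y = T y" using T'o by blast
  qed
  then have vfT': "anc T' v v'" using anc_step2[of T' v x0 v'] T'ch[OF x0(1)] by blast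
  have ag: "ancso T' (T v') = ancso T (T v')"
  proof (rule ancso_agree)
    fix y assume y: "y \<in> ancso T (T v')"
    then have vy: "anc T v' y" by (rule ancso_anc)
    obtain q where q: "T v' = Some q" "anc T q y" using y by (cases "T v'") (auto simp: ancso_def ancs_def)
    have "y \<noteq> v'" using good_nocyc[OF g q(1)] q(2) by blast
    moreover have "y \<noteq> c"
    proof
      assume "y = c"
      then show False using good_nocyc[OF g tc] vy by simp
    qed
    moreover have "T y \<noteq> Some c"
    proof
      assume "T y = Some c"
      then have "anc T y v'" using anc_step[OF _ anc_step[OF tc anc_refl[of T v']]] by blast
      then have "y = v'" using good_antisym[OF g] vy by blast
      then show False using \<open>y \<noteq> v'\<close> by simp
    qed
    ultimately show "T' y = T y" using T'o by blast
  qed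
  have A1: "ancs T v' = insert v' (ancso T (T v'))" using ancs_unf[of T v'] .
  have A2: "ancs T' v' = insert v' (insert c (ancso T (T v')))"
    using ancs_unf[of T' v'] ancs_unf[of T' c] T'v' T'c ag by (simp add: ancso_def)
  have c1: "c \<notin> ancso T (T v')"
  proof
    assume "c \<in> ancso T (T v')"
    then have "anc T v' c" by (rule ancso_anc)
    then show False using good_nocyc[OF g tc] by blast
  qed
  have c2: "v' \<notin> ancso T (T v')"
  proof
    assume "v' \<in> ancso T (T v')"
    then obtain q where q: "T v' = Some q" "anc T q v'" by (cases "T v'") (auto simp: ancso_def ancs_def)
    then show False using good_nocyc[OF g] by blast
  qed
  have "finite (ancso T (T v'))"
    using ancs_fin[OF g finVV, of v'] A1 by (metis finite_insert)
  then have "card (ancs T' v') = Suc (card (ancs T v'))" using A1 A2 c1 c2 cv' by simp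
  then show ?thesis using vfT' KK by blast
qed

end




context tw begin

lemma case_a:
  assumes g: "good EE VV T" and g': "good EE VV T'" and vf: "anc T v v'"
    and tw: "T w = Some u" and uv': "u \<noteq> v'" and wv': "w \<noteq> v'"
    and T': "T' = rotate EE T u w"
  shows "K T w = Some u \<and> K T' = rotate E (K T) u w \<and> anc T' v v' \<and> ancs T' v' = ancs T v'"
proof -
  have uw: "u \<noteq> w" using good_noself[OF g] tw by blast
  have wV: "w \<in> V" using good_dom[OF g tw] wv' by blast
  have uV: "u \<in> V" using good_par[OF g tw] uv' by blast
  have KTw: "K T w = Some u" using tw wv' uv' by (simp add: K_def)
  have T'w: "T' w = T u" using T' by (simp add: rot_at_w)
  have T'u: "T' u = Some w" using T' uw by (simp add: rot_at_u)
  have T'ch: "T' x = (if \<exists>y\<in>subtree T x. EE u y then Some u else Some w)"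
    if "x \<noteq> w" "x \<noteq> u" "T x = Some w" for x
    using T' rot_ch[of x w u T EE, OF that] by simp
  have T'o: "T' x = T x" if "x \<noteq> w" "x \<noteq> u" "T x \<noteq> Some w" for x
    using T' rot_oth[of x w u T EE, OF that] by simp
  have Euv: "E u v" if "u \<noteq> v" using univ uV that E_sym by blast
  have EEuv: "EE u v" if "u \<noteq> v" using Euv[OF that] by (simp add: add_twin_def)
  have cond: "(\<exists>y\<in>subtree (K T) x. E u y) \<longleftrightarrow> (\<exists>y\<in>subtree T x. EE u y)"
    if x: "x \<noteq> v'" "T x = Some w" for x
  proof
    assume "\<exists>y\<in>subtree (K T) x. E u y"
    then show "\<exists>y\<in>subtree T x. EE u y" using K_sub[OF g x(1)] by (auto simp: add_twin_def)
  next
    assume "\<exists>y\<in>subtree T x. EE u y"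
    then obtain y where y: "y \<in> subtree T x" "EE u y" by blast
    have yVV: "y \<in> VV" using good_sub[OF g good_dom[OF g x(2)]] y(1) by (simp add: subtree_anc)
    show "\<exists>y\<in>subtree (K T) x. E u y"
    proof (cases "y = v'")
      case False
      then have "E u y" using y(2) EE_V uV yVV by auto
      then show ?thesis using y(1) False K_sub[OF g x(1)] by blast
    next
      case True
      then have v'x: "anc T v' x" using y(1) by (simp add: subtree_anc)
      then have vx: "anc T v x" using anc_trans vf by metis
      have "u \<noteq> v"
      proof
        assume "u = v"
        then have "anc T v' v" using anc_step2[OF anc_step2[OF v'x x(2)] tw] by simp
        then show False using good_antisym[OF g vf] vv' by blast
      qed
      then have "E u v" by (rule Euv)
      moreover have "v \<in> subtree (K T) x" using vx vv' K_sub[OF g x(1)] by (simp add: subtree_anc)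
      ultimately show ?thesis by blast
    qed
  qed
  have KK: "K T' = rotate E (K T) u w"
  proof (rule ext)
    fix x
    consider "x = v'" | "x = w" | "x = u" | "x \<noteq> v'" "x \<noteq> w" "x \<noteq> u" "T x = Some w"
      | "x \<noteq> v'" "x \<noteq> w" "x \<noteq> u" "T x = Some v'"
      | "x \<noteq> v'" "x \<noteq> w" "x \<noteq> u" "T x \<noteq> Some w" "T x \<noteq> Some v'" by blast
    then show "K T' x = rotate E (K T) u w x"
    proof cases
      case 1 then show ?thesis using uv' wv' by (simp add: K_def rotate_def)
    next
      case 2
      show ?thesis
      proof (cases "T u = Some v'")
        case True
        have "T v' \<noteq> Some w"
        proof
          assume "T v' = Some w"
          have "anc T w v'" using anc_step[OF tw anc_step[OF True anc_refl[of T v']]] .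
          moreover have "anc T v' w" using anc_step[OF \<open>T v' = Some w\<close> anc_refl[of T w]] .
          ultimately show False using good_antisym[OF g] wv' by blast
        qed
        then have "T' v' = T v'" using T'o[of v'] uv' wv' by metis
        then show ?thesis using 2 T'w True wv' uv' by (simp add: K_def rotate_def)
      next
        case False
        then show ?thesis using 2 T'w wv' uv' by (simp add: K_def rotate_def)
      qed
    next
      case 3 then show ?thesis using T'u uw uv' wv' by (simp add: K_def rotate_def)
    next
      case 4
      have "T' x \<noteq> Some v'" using T'ch[OF 4(2,3,4)] uv' wv' by (simp split: if_splits)
      then have "K T' x = T' x" using 4 by (simp add: K_def)
      moreover have "K T x = Some w" using 4 wv' by (simp add: K_def)
      ultimately show ?thesis using T'ch[OF 4(2,3,4)] cond[OF 4(1,4)] 4 by (simp add: rotate_def)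
    next
      case 5
      have T'x: "T' x = Some v'" using T'o[OF 5(2,3)] 5(4) wv' by simp
      show ?thesis
      proof (cases "T v' = Some w")
        case True
        have "u \<noteq> v"
        proof
          assume "u = v"
          then have "anc T v' v" using anc_step[OF True anc_step[OF tw anc_refl[of T u]]] by simp
          then show False using good_antisym[OF g vf] vv' by blast
        qed
        have "v \<in> subtree T v'" using vf by (simp add: subtree_anc)
        then have "\<exists>y\<in>subtree T v'. EE u y" using EEuv[OF \<open>u \<noteq> v\<close>] by blast
        then have "T' v' = Some u" using T'ch[of v'] uv' wv' True by simp
        then have L: "K T' x = Some u" using T'x 5 by (simp add: K_def)
        have "anc T v x" using UAv[OF g vf vv' 5(4)] .
        then have "v \<in> subtree (K T) x" using K_sub[OF g 5(1)] vv' by (simp add: subtree_anc)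
        then have "\<exists>y\<in>subtree (K T) x. E u y" using Euv[OF \<open>u \<noteq> v\<close>] by blast
        moreover have "K T x = Some w" using 5 True by (simp add: K_def)
        ultimately show ?thesis using L 5 by (simp add: rotate_def)
      next
        case False
        then have "T' v' = T v'" using T'o[of v'] uv' wv' by metis
        then show ?thesis using T'x 5 False by (simp add: K_def rotate_def)
      qed
    next
      case 6
      then show ?thesis using T'o[OF 6(2,3,4)] by (simp add: K_def rotate_def)
    qed
  qed
  have AA: "ancs T' v' = ancs T v'"
  proof (cases "u \<in> ancs T v'")
    case False
    show ?thesis
    proof (rule ancs_agree)
      fix y assume y: "y \<in> ancs T v'"
      have "y \<noteq> u" using y False by blast
      moreover have "y \<noteq> w"
      proof
        assume "y = w"
        then have "u \<in> ancs T v'" using y anc_step2[of T v' w u] tw by (simp add: ancs_def)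
        then show False using False by simp
      qed
      moreover have "T y \<noteq> Some w"
      proof
        assume "T y = Some w"
        then have "u \<in> ancs T v'" using y anc_step2[OF anc_step2[of T v' y w] tw] by (simp add: ancs_def)
        then show False using False by simp
      qed
      ultimately show "T' y = T y" using T'o by blast
    qed
  next
    case True
    then have v'u: "anc T v' u" by (simp add: ancs_def)
    have "anc T v' w" using UAv'[OF g v'u uv'[symmetric] tw] .
    from anc_cases2[OF this] wv'[symmetric] obtain x0 where x0: "T x0 = Some w" "anc T v' x0" by blast
    have x0w: "x0 \<noteq> w" using good_noself[OF g] x0(1) by blast
    have x0u: "x0 \<noteq> u" using good_nocyc2[OF g x0(1)] tw by blast
    have uv: "u \<noteq> v"
    proof
      assume "u = v" then show False using v'u good_antisym[OF g vf] vv' by blast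
    qed
    have "v \<in> subtree T x0" using anc_trans[OF vf x0(2)] by (simp add: subtree_anc)
    then have T'x0: "T' x0 = Some u" using T'ch[OF x0w x0u x0(1)] EEuv[OF uv] by auto
    have x0w_anc: "anc T x0 w" using anc_step[OF x0(1) anc_refl[of T w]] .
    have x0u_anc: "anc T x0 u" using anc_step[OF x0(1) anc_step[OF tw anc_refl[of T u]]] .
    have seg: "anc T' v' z" if z: "anc T v' z" "anc T z x0" for z
    proof (rule path_agree[OF z(1)])
      fix y assume y: "anc T v' y" "anc T y z" "y \<noteq> z"
      have yx0: "anc T y x0" using anc_trans[OF y(2) z(2)] .
      have "y \<noteq> u"
      proof
        assume "y = u" then show False using good_antisym[OF g x0u_anc] yx0 x0u by blast
      qed
      moreover have "y \<noteq> w"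
      proof
        assume "y = w" then show False using good_antisym[OF g x0w_anc] yx0 x0w by blast
      qed
      moreover have "T y \<noteq> Some w"
      proof
        assume "T y = Some w"
        then have "y = x0" using good_same_parent[OF g _ x0(1) yx0] by blast
        then have "anc T z y" using z(2) by simp
        then show False using good_antisym[OF g y(2)] y(3) by blast
      qed
      ultimately show "T' y = T y" using T'o by blast
    qed
    have v'x0': "anc T' v' x0" using seg[OF x0(2) anc_refl] .
    have v'u': "anc T' v' u" using anc_step2[OF v'x0' T'x0] .
    have v'w': "anc T' v' w" using anc_step2[OF v'u' T'u] .
    have above: "anc T' v' z" if "anc T u z" for z
    proof -
      from anc_cases[OF that] show ?thesis
      proof
        assume "u = z" then show ?thesis using v'u' by simp
      next
        assume "\<exists>p. T u = Some p \<and> anc T p z"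
        then obtain p where p: "T u = Some p" "anc T p z" by blast
        have "ancs T' p = ancs T p"
        proof (rule ancs_agree)
          fix y assume "y \<in> ancs T p"
          then have py: "anc T p y" by (simp add: ancs_def)
          have uy: "anc T u y" using anc_step[OF p(1) py] .
          have wy: "anc T w y" using anc_step[OF tw uy] .
          have "y \<noteq> u" using good_nocyc[OF g p(1)] py by blast
          moreover have "y \<noteq> w"
          proof
            assume "y = w" then show False using good_nocyc[OF g tw] uy by simp
          qed
          moreover have "T y \<noteq> Some w"
          proof
            assume "T y = Some w" then show False using good_nocyc[OF g] wy by blast
          qed
          ultimately show "T' y = T y" using T'o by blast
        qed
        then have "anc T' p z" using p(2) by (simp add: ancs_def set_eq_iff)
        moreover have "anc T' v' p" using anc_step2[OF v'w'] T'w p(1) by simp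
        ultimately show ?thesis using anc_trans by metis
      qed
    qed
    show ?thesis
    proof
      show "ancs T v' \<subseteq> ancs T' v'"
      proof
        fix z assume "z \<in> ancs T v'"
        then have v'z: "anc T v' z" by (simp add: ancs_def)
        have "anc T z x0 \<or> anc T x0 z" using anc_det[OF v'z x0(2)] .
        then show "z \<in> ancs T' v'"
        proof
          assume "anc T z x0" then show ?thesis using seg v'z by (simp add: ancs_def)
        next
          assume x0z: "anc T x0 z"
          from anc_cases[OF x0z] show ?thesis
          proof
            assume "x0 = z" then show ?thesis using v'x0' by (simp add: ancs_def)
          next
            assume "\<exists>p. T x0 = Some p \<and> anc T p z"
            then have wz: "anc T w z" using x0(1) by auto
            from anc_cases[OF wz] show ?thesis
            proof
              assume "w = z" then show ?thesis using v'w' by (simp add: ancs_def)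
            next
              assume "\<exists>p. T w = Some p \<and> anc T p z"
              then have "anc T u z" using tw by auto
              then show ?thesis using above by (simp add: ancs_def)
            qed
          qed
        qed
      qed
    next
      show "ancs T' v' \<subseteq> ancs T v'"
      proof
        fix z assume "z \<in> ancs T' v'"
        then have "anc T' v' z" by (simp add: ancs_def)
        then have "anc T v' z" unfolding anc_def[of T']
        proof (induction rule: rtranclp_induct)
          case base then show ?case by simp
        next
          case (step y z)
          consider "y = w" | "y = u" | "y \<noteq> w" "y \<noteq> u" "T y = Some w" | "y \<noteq> w" "y \<noteq> u" "T y \<noteq> Some w" by blast
          then show ?case
          proof cases
            case 1
            then have "T u = Some z" using step(2) T'w by simp
            then show ?thesis using anc_step2[OF v'u] by blast
          next
            case 2
            then have "z = w" using step(2) T'u by simp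
            then show ?thesis using \<open>anc T v' w\<close> by simp
          next
            case 3
            then have "z = u \<or> z = w" using step(2) T'ch[OF 3] by (simp split: if_splits)
            then show ?thesis using v'u \<open>anc T v' w\<close> by blast
          next
            case 4
            then have "T y = Some z" using step(2) T'o[OF 4] by simp
            then show ?thesis using anc_step2[OF step(3)] by blast
          qed
        qed
        then show "z \<in> ancs T v'" by (simp add: ancs_def)
      qed
    qed
  qed
  have "anc T' v v' \<or> anc T' v' v"
    using good_edge[OF g' _ _ EE_vv'(1)] vV by blast
  moreover have "\<not> anc T' v' v"
  proof
    assume "anc T' v' v"
    then have "v \<in> ancs T v'" using AA by (simp add: ancs_def set_eq_iff)
    then show False using good_antisym[OF g vf] vv' by (simp add: ancs_def)
  qed
  ultimately have "anc T' v v'" by blast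
  then show ?thesis using KTw KK AA by blast
qed

end




context tw begin

lemma swT_rotate: "swT (rotate EE T u w) = rotate EE (swT T) (sw u) (sw w)"
proof (rule ext)
  fix x
  have ex: "(\<exists>y\<in>subtree (swT T) x. EE (sw u) y) \<longleftrightarrow> (\<exists>y\<in>subtree T (sw x). EE u y)"
  proof
    assume "\<exists>y\<in>subtree (swT T) x. EE (sw u) y"
    then obtain y where "y \<in> subtree (swT T) x" "EE (sw u) y" by blast
    then have "sw y \<in> subtree T (sw x)" "EE u (sw y)" using EE_sw[of u "sw y"] by (auto simp: swT_sub sw_image)
    then show "\<exists>y\<in>subtree T (sw x). EE u y" by blast
  next
    assume "\<exists>y\<in>subtree T (sw x). EE u y"
    then obtain y where "y \<in> subtree T (sw x)" "EE u y" by blast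
    then have "sw y \<in> subtree (swT T) x" "EE (sw u) (sw y)" using EE_sw[of u y] by (auto simp: swT_sub sw_image)
    then show "\<exists>y\<in>subtree (swT T) x. EE (sw u) y" by blast
  qed
  consider "sw x = w" | "sw x \<noteq> w" "sw x = u" | "sw x \<noteq> w" "sw x \<noteq> u" by blast
  then show "swT (rotate EE T u w) x = rotate EE (swT T) (sw u) (sw w) x"
  proof cases
    case 1
    then have "x = sw w" by (metis sw_sw)
    then show ?thesis using 1 by (simp add: swT_def rotate_def)
  next
    case 2
    then have "x = sw u" "x \<noteq> sw w" by (metis sw_sw)+
    then show ?thesis using 2 by (simp add: swT_def rotate_def)
  next
    case 3
    then have x: "x \<noteq> sw u" "x \<noteq> sw w" by (metis sw_sw)+
    show ?thesis
    proof (cases "T (sw x) = Some w")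
      case True
      then have sT: "swT T x = Some (sw w)" by (simp add: swT_Some)
      have L: "rotate EE T u w (sw x) = (if \<exists>y\<in>subtree T (sw x). EE u y then Some u else Some w)"
        by (rule rot_ch) (use 3 True in auto)
      have R: "rotate EE (swT T) (sw u) (sw w) x = (if \<exists>y\<in>subtree (swT T) x. EE (sw u) y then Some (sw u) else Some (sw w))"
        by (rule rot_ch) (use x sT in auto)
      show ?thesis using L R ex by (simp add: swT_def[of "rotate EE T u w"])
    next
      case False
      then have sT: "swT T x \<noteq> Some (sw w)" by (simp add: swT_Some)
      have L: "rotate EE T u w (sw x) = T (sw x)"
        by (rule rot_oth) (use 3 False in auto)
      have R: "rotate EE (swT T) (sw u) (sw w) x = swT T x"
        by (rule rot_oth) (use x sT in auto)
      show ?thesis using L R by (simp add: swT_def)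
    qed
  qed
qed

definition phi :: "('a \<Rightarrow> 'a option) \<Rightarrow> ('a \<Rightarrow> 'a option)" where
  "phi T = (if anc T v v' then K T else K (swT T))"

definition par :: "('a \<Rightarrow> 'a option) \<Rightarrow> nat" where
  "par T = (if anc T v v' then card (ancs T v') mod 2 else Suc (card (ancs T v)) mod 2)"

lemma par_lt: "par T < 2" by (simp add: par_def)

lemma ancs_swT: "ancs (swT T) x = sw ` ancs T (sw x)"
  unfolding sw_image by (auto simp: ancs_def swT_anc)

lemma card_sw: "card (sw ` A) = card A"
  using card_image[of sw A] sw_inj by (simp add: inj_on_def)

lemma vf_dich: "good EE VV T \<Longrightarrow> anc T v v' \<or> anc T v' v"
  using good_edge[of EE VV T v v'] vV EE_vv' by blast

lemma vf_excl: "good EE VV T \<Longrightarrow> anc T v v' \<Longrightarrow> anc T v' v \<Longrightarrow> False"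
  using good_antisym vv' by metis

lemma vf_swT: "anc (swT T) v v' \<longleftrightarrow> anc T v' v"
  by (simp add: swT_anc)

lemma swap_phi: assumes g: "good EE VV T" shows "phi (swT T) = phi T"
proof (cases "anc T v v'")
  case True
  then have "\<not> anc T v' v" using vf_excl[OF g] by blast
  then show ?thesis using True by (simp add: phi_def vf_swT)
next
  case False
  then have "anc T v' v" using vf_dich[OF g] by blast
  then show ?thesis using False by (simp add: phi_def vf_swT)
qed

lemma mod2_suc: "Suc n mod 2 \<noteq> n mod 2" by presburger
lemma mod2_suc': "n mod 2 \<noteq> Suc n mod 2" by presburger

lemma swap_par: assumes g: "good EE VV T" shows "par (swT T) \<noteq> par T"
proof (cases "anc T v v'")
  case True
  then have "\<not> anc T v' v" using vf_excl[OF g] by blast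
  then have "par (swT T) = Suc (card (ancs T v')) mod 2"
    by (simp add: par_def vf_swT ancs_swT card_sw)
  then show ?thesis using True mod2_suc by (simp add: par_def)
next
  case False
  then have "anc T v' v" using vf_dich[OF g] by blast
  then have "par (swT T) = card (ancs T v) mod 2"
    by (simp add: par_def vf_swT ancs_swT card_sw)
  then show ?thesis using False mod2_suc by (simp add: par_def) metis
qed

lemma phi_good: assumes g: "good EE VV T" shows "good E V (phi T)"
proof (cases "anc T v v'")
  case True then show ?thesis using K_good[OF g] by (simp add: phi_def)
next
  case False
  then have "anc (swT T) v v'" using vf_dich[OF g] vf_swT by blast
  then show ?thesis using K_good[OF swT_good[OF g]] False by (simp add: phi_def)
qed

definition Rel where
  "Rel T T' \<longleftrightarrow> (rot_step E (phi T) (phi T') \<and> par T = par T') \<or> (phi T = phi T' \<and> par T \<noteq> par T')"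

lemma main_vf:
  assumes g: "good EE VV T" and g': "good EE VV T'" and vf: "anc T v v'"
    and tw: "T w = Some u" and T': "T' = rotate EE T u w"
  shows "Rel T T'"
proof -
  have uw: "u \<noteq> w" using good_noself[OF g] tw by blast
  consider "u = v'" "w = v" | "w = v'" | "u = v'" "w \<noteq> v" | "u \<noteq> v'" "w \<noteq> v'" using uw by blast
  then show ?thesis
  proof cases
    case 1
    then have "T' = swT T" using case_b[OF g vf] tw T' by simp
    then show ?thesis using swap_phi[OF g] swap_par[OF g] by (simp add: Rel_def)
  next
    case 2
    then have "anc T' v v' \<and> K T' = K T \<and> card (ancs T v') = Suc (card (ancs T' v'))"
      using case_c[OF g vf] tw T' by simp
    then show ?thesis using vf mod2_suc by (simp add: Rel_def phi_def par_def)
  next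
    case 3
    then have "anc T' v v' \<and> K T' = K T \<and> card (ancs T' v') = Suc (card (ancs T v'))"
      using case_d[OF g vf _ 3(2)] tw T' by simp
    then show ?thesis using vf mod2_suc' by (simp add: Rel_def phi_def par_def)
  next
    case 4
    have A: "K T w = Some u \<and> K T' = rotate E (K T) u w \<and> anc T' v v' \<and> ancs T' v' = ancs T v'"
      using case_a[OF g g' vf tw 4 T'] by simp
    then have "rot_step E (K T) (K T')" unfolding rot_step_def by blast
    then show ?thesis using vf A by (simp add: Rel_def phi_def par_def)
  qed
qed

lemma main_rel:
  assumes g: "good EE VV T" and g': "good EE VV T'" and st: "rot_step EE T T'"
  shows "Rel T T'"
proof -
  obtain u w where tw: "T w = Some u" and T': "T' = rotate EE T u w" using st unfolding rot_step_def by blast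
  show ?thesis
  proof (cases "anc T v v'")
    case True show ?thesis using main_vf[OF g g' True tw T'] .
  next
    case False
    then have vf2: "anc (swT T) v v'" using vf_dich[OF g] vf_swT by blast
    have tw2: "swT T (sw w) = Some (sw u)" using tw by (simp add: swT_Some)
    have T2': "swT T' = rotate EE (swT T) (sw u) (sw w)" using T' swT_rotate by simp
    have R: "Rel (swT T) (swT T')" using main_vf[OF swT_good[OF g] swT_good[OF g'] vf2 tw2 T2'] .
    have p1: "par (swT T) \<noteq> par T" "par (swT T') \<noteq> par T'" using swap_par g g' by blast+
    have p2: "par (swT T) < 2" "par T < 2" "par (swT T') < 2" "par T' < 2" using par_lt by blast+
    have "par (swT T) = par (swT T') \<longleftrightarrow> par T = par T'" using p1 p2 by linarith
    then show ?thesis using R swap_phi[OF g] swap_phi[OF g'] unfolding Rel_def by simp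
  qed
qed

end




lemma rot_irr: assumes "good E S T" shows "\<not> rot_step E T T"
proof
  assume "rot_step E T T"
  then obtain u w where tw: "T w = Some u" and T: "T = rotate E T u w" unfolding rot_step_def by blast
  have "T w = T u" using T rot_at_w[of E T u w] by metis
  then have "T u = Some u" using tw by simp
  then show False using good_noself[OF assms] by blast
qed

lemma rotv_good: "T \<in> rot_vertices S E \<Longrightarrow> (\<And>a b. E a b \<Longrightarrow> E b a) \<Longrightarrow> good E S T"
  unfolding rot_vertices_def using st_good by blast

lemma rotv_fin:
  assumes "finite S" "\<And>a b. E a b \<Longrightarrow> E b a"
  shows "finite (rot_vertices S E)"
proof -
  have "rot_vertices S E \<subseteq> {T. (\<forall>x. x \<notin> S \<longrightarrow> T x = None) \<and> (\<forall>x y. T x = Some y \<longrightarrow> y \<in> S)}"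
  proof
    fix T assume "T \<in> rot_vertices S E"
    then have g: "good E S T" using st_good assms(2) unfolding rot_vertices_def by blast
    show "T \<in> {T. (\<forall>x. x \<notin> S \<longrightarrow> T x = None) \<and> (\<forall>x y. T x = Some y \<longrightarrow> y \<in> S)}"
      using good_out[OF g] good_par[OF g] by blast
  qed
  then show ?thesis using finite_trees[OF assms(1)] finite_subset by blast
qed

lemma colorable_rot:
  assumes "finite S" "\<And>a b. E a b \<Longrightarrow> E b a"
  shows "colorable (rot_vertices S E) (rot_adj E) (chromatic_number (rot_vertices S E) (rot_adj E))"
proof (rule chrom_col)
  show "colorable (rot_vertices S E) (rot_adj E) (card (rot_vertices S E))"
  proof (rule colorable_finite[OF rotv_fin[OF assms]])
    fix T assume "T \<in> rot_vertices S E"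
    then have "good E S T" using rotv_good assms(2) by blast
    then show "\<not> rot_adj E T T" using rot_irr unfolding rot_adj_def by blast
  qed
qed

lemma mod_small: "(x::nat) \<le> k \<Longrightarrow> 0 < k \<Longrightarrow> x mod k = (if x = k then 0 else x)"
  by (cases "x = k") auto

lemma modcol:
  fixes a b k p q :: nat
  assumes "a < k" "b < k" "p < 2" "q < 2" "2 \<le> k" "(a \<noteq> b \<and> p = q) \<or> (a = b \<and> p \<noteq> q)"
  shows "(a + p) mod k \<noteq> (b + q) mod k"
proof -
  have "(a + p) mod k = (if a + p = k then 0 else a + p)" using mod_small[of "a+p" k] assms by simp
  moreover have "(b + q) mod k = (if b + q = k then 0 else b + q)" using mod_small[of "b+q" k] assms by simp
  ultimately show ?thesis using assms by (auto split: if_splits)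
qed

lemma addroot_sub: "good E S T \<Longrightarrow> x \<notin> S \<Longrightarrow> y \<noteq> x \<Longrightarrow> subtree (addroot x S T) y = subtree T y"
  using addroot_anc1[of E S T x] addroot_anc2[of E S T x] by (auto simp: subtree_anc)

context tw begin

lemma conn_V: "v \<in> B \<Longrightarrow> B \<subseteq> V \<Longrightarrow> connected_on E B"
  by (rule conn_univ[of v]) (use univ E_sym in blast)+

lemma conn_VV: "connected_on EE VV"
  by (rule conn_univ[of v']) (use EE_univ_v' EE_sym in blast)+

lemma psi_good: assumes "good E V T" shows "good EE VV (addroot v' V T)"
proof -
  have "good EE V T" using good_cong[OF assms] EE_V by metis
  then show ?thesis using addroot_good[OF _ v'V conn_VV] by blast
qed

lemma psi_rot:
  assumes g: "good E V T" and tw: "T w = Some u"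
  shows "addroot v' V (rotate E T u w) = rotate EE (addroot v' V T) u w"
proof (rule ext)
  fix x
  let ?P = "addroot v' V T"
  have wV: "w \<in> V" using good_dom[OF g tw] .
  have uV: "u \<in> V" using good_par[OF g tw] .
  have uw: "u \<noteq> w" using good_noself[OF g] tw by blast
  have wv': "w \<noteq> v'" "u \<noteq> v'" using wV uV v'V by auto
  consider "x = v'" | "x = w" | "x = u" | "x \<noteq> v'" "x \<noteq> w" "x \<noteq> u" "T x = Some w"
    | "x \<noteq> v'" "x \<noteq> w" "x \<noteq> u" "T x \<noteq> Some w" by blast
  then show "addroot v' V (rotate E T u w) x = rotate EE ?P u w x"
  proof cases
    case 1 then show ?thesis using wv' by (simp add: addroot_def rotate_def)
  next
    case 2 then show ?thesis using wv' wV uV by (simp add: addroot_def rotate_def)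
  next
    case 3 then show ?thesis using wv' uw uV by (simp add: addroot_def rotate_def)
  next
    case 4
    have xV: "x \<in> V" using good_dom[OF g 4(4)] .
    have Px: "?P x = Some w" using 4 by (simp add: addroot_def)
    have sub: "subtree ?P x = subtree T x" using addroot_sub[OF g v'V 4(1)] .
    have subV: "subtree T x \<subseteq> V" using good_sub[OF g xV] by (auto simp: subtree_anc)
    have ex: "(\<exists>y\<in>subtree T x. EE u y) \<longleftrightarrow> (\<exists>y\<in>subtree T x. E u y)" using subV EE_V uV by blast
    have R: "rotate EE ?P u w x = (if \<exists>y\<in>subtree T x. EE u y then Some u else Some w)"
      using rot_ch[of x w u ?P EE, OF 4(2,3) Px] sub by simp
    have L: "rotate E T u w x = (if \<exists>y\<in>subtree T x. E u y then Some u else Some w)"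
      using rot_ch[of x w u T E, OF 4(2,3,4)] by simp
    show ?thesis using L R ex 4 by (simp add: addroot_def)
  next
    case 5
    have Px: "?P x \<noteq> Some w" using 5 wv' by (simp add: addroot_def)
    have R: "rotate EE ?P u w x = ?P x" using rot_oth[of x w u ?P EE, OF 5(2,3) Px] .
    have L: "rotate E T u w x = T x" using rot_oth[of x w u T E, OF 5(2,3,4)] .
    show ?thesis using L R by (simp add: addroot_def)
  qed
qed

lemma exists_tree: "finite A \<Longrightarrow> A \<subseteq> V - {v} \<Longrightarrow> \<exists>T. good E (insert v A) T"
proof (induction A rule: finite_induct)
  case empty
  have "good E {v} (\<lambda>_. None)"
  proof (rule goodI[where r=v])
    show "\<And>x. x \<in> {v} \<Longrightarrow> anc (\<lambda>_. None) x v" by simp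
    show "\<And>a b. a \<in> {v} \<Longrightarrow> b \<in> {v} \<Longrightarrow> E a b \<Longrightarrow> anc (\<lambda>_. None) a b \<or> anc (\<lambda>_. None) b a" by simp
    show "connected_on E (subtree (\<lambda>_. None) x)" if "x \<in> {v}" for x
    proof -
      have "subtree (\<lambda>_. None) x = {x}" using anc_None[of "\<lambda>_. None"] by (auto simp: subtree_anc)
      then show ?thesis using that conn_V vV by simp
    qed
  qed auto
  then show ?case by auto
next
  case (insert x A)
  then obtain T where T: "good E (insert v A) T" by blast
  have x: "x \<notin> insert v A" using insert.hyps(2) insert.prems by blast
  have "connected_on E (insert x (insert v A))" by (rule conn_V) (use insert.prems vV in auto)
  then have "good E (insert x (insert v A)) (addroot x (insert v A) T)" using addroot_good[OF T x] by blast
  then show ?case by (metis insert_commute)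
qed

lemma edge_exists:
  assumes "\<exists>x\<in>V. \<exists>y\<in>V. x \<noteq> y \<and> \<not> E x y"
  shows "\<exists>T1 T2. good E V T1 \<and> good E V T2 \<and> rot_step E T1 T2"
proof -
  obtain x w where xw: "x \<in> V" "w \<in> V" "x \<noteq> w" "\<not> E x w" using assms by blast
  have xv: "x \<noteq> v"
  proof
    assume "x = v" then have "E v w" using univ xw by auto
    then show False using xw \<open>x = v\<close> by simp
  qed
  have wv: "w \<noteq> v"
  proof
    assume "w = v" then have "E v x" using univ xw by auto
    then show False using xw \<open>w = v\<close> E_sym by blast
  qed
  define C where "C = V - {x, w}"
  have C: "C = insert v (V - {v, x, w})" using vV xv wv by (auto simp: C_def)
  obtain TC where TC: "good E C TC"
    using exists_tree[of "V - {v, x, w}"] finV C by auto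
  have vC: "v \<in> C" "x \<notin> C" "w \<notin> C" "C \<subseteq> V" using C by (auto simp: C_def)
  define R1 where "R1 = addroot x C TC"
  define Tw where "Tw = addroot w (insert x C) R1"
  define R2 where "R2 = addroot w C TC"
  define Tx where "Tx = addroot x (insert w C) R2"
  have gR1: "good E (insert x C) R1" unfolding R1_def
    by (rule addroot_good[OF TC vC(2)]) (rule conn_V, use vC xw in auto)
  have gTw: "good E (insert w (insert x C)) Tw" unfolding Tw_def
    by (rule addroot_good[OF gR1]) (use vC xw in auto, rule conn_V, use vC xw in auto)
  have gR2: "good E (insert w C) R2" unfolding R2_def
    by (rule addroot_good[OF TC vC(3)]) (rule conn_V, use vC xw in auto)
  have gTx: "good E (insert x (insert w C)) Tx" unfolding Tx_def
    by (rule addroot_good[OF gR2]) (use vC xw in auto, rule conn_V, use vC xw in auto)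
  have VV1: "insert w (insert x C) = V" "insert x (insert w C) = V" using xw by (auto simp: C_def)
  obtain r where r: "r \<in> C" "TC r = None" "\<And>y. y \<in> C \<Longrightarrow> anc TC y r" using good_root[OF TC] by blast
  have Twx: "Tw x = Some w" using xw by (simp add: Tw_def R1_def addroot_def)
  have "Tx = rotate E Tw w x"
  proof (rule ext)
    fix y
    consider "y = x" | "y = w" | "y \<notin> V" | "y \<in> C" "y = r" | "y \<in> C" "y \<noteq> r" using VV1 by blast
    then show "Tx y = rotate E Tw w x y"
    proof cases
      case 1 then show ?thesis using xw by (simp add: Tx_def Tw_def R1_def R2_def addroot_def rotate_def)
    next
      case 2 then show ?thesis using xw by (simp add: Tx_def Tw_def R1_def R2_def addroot_def rotate_def)
    next
      case 3
      then have "y \<notin> C" "y \<noteq> x" "y \<noteq> w" using vC xw by auto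
      moreover have "TC y = None" using good_out[OF TC] \<open>y \<notin> C\<close> by blast
      ultimately show ?thesis using xw by (simp add: Tx_def Tw_def R1_def R2_def addroot_def rotate_def)
    next
      case 4
      have ne: "y \<noteq> x" "y \<noteq> w" using 4 vC by auto
      have Twy: "Tw y = Some x" using 4 r(2) ne by (simp add: Tw_def R1_def addroot_def)
      have "anc R1 v r" using addroot_anc1[OF TC vC(2) r(3)[OF vC(1)]] unfolding R1_def .
      moreover have "w \<notin> insert x C" using vC xw by blast
      ultimately have "anc Tw v r" unfolding Tw_def using addroot_anc1[OF gR1] by blast
      moreover have "E w v" using univ xw wv E_sym by blast
      ultimately have "\<exists>z\<in>subtree Tw y. E w z" using 4 by (auto simp: subtree_anc)
      then have "rotate E Tw w x y = Some w" using rot_ch[of y x w Tw E, OF ne Twy] by simp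
      moreover have "Tx y = Some w" using 4 r(2) ne by (simp add: Tx_def R2_def addroot_def)
      ultimately show ?thesis by simp
    next
      case 5
      have ne: "y \<noteq> x" "y \<noteq> w" using 5 vC by auto
      have "TC y \<noteq> None"
      proof
        assume "TC y = None"
        then have "y = r" using anc_None[OF r(3)[OF 5(1)]] by simp
        then show False using 5 by simp
      qed
      then obtain p where p: "TC y = Some p" by blast
      have "p \<in> C" using good_par[OF TC p] .
      then have px: "p \<noteq> x" using vC by blast
      have Twy: "Tw y = Some p" using 5 p ne by (simp add: Tw_def R1_def addroot_def)
      have "rotate E Tw w x y = Some p" using rot_oth[of y x w Tw E, OF ne] Twy px by simp
      moreover have "Tx y = Some p" using 5 p ne by (simp add: Tx_def R2_def addroot_def)
      ultimately show ?thesis by simp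
    qed
  qed
  then have "rot_step E Tw Tx" using Twx unfolding rot_step_def by blast
  then show ?thesis using gTw gTx VV1 by auto
qed

end




context tw begin

lemma EE_sym': "\<And>a b. EE a b \<Longrightarrow> EE b a" using EE_sym by blast
lemma E_sym': "\<And>a b. E a b \<Longrightarrow> E b a" using E_sym by blast

lemma lower:
  "chromatic_number (rot_vertices V E) (rot_adj E) \<le> chromatic_number (rot_vertices VV EE) (rot_adj EE)"
proof -
  let ?k = "chromatic_number (rot_vertices VV EE) (rot_adj EE)"
  have "colorable (rot_vertices VV EE) (rot_adj EE) ?k" using colorable_rot[OF finVV EE_sym'] .
  then obtain c where c: "\<forall>x\<in>rot_vertices VV EE. c x < ?k"
    "\<forall>x\<in>rot_vertices VV EE. \<forall>y\<in>rot_vertices VV EE. rot_adj EE x y \<longrightarrow> c x \<noteq> c y"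
    unfolding colorable_def by blast
  have inW: "addroot v' V T \<in> rot_vertices VV EE" if "T \<in> rot_vertices V E" for T
  proof -
    have "good E V T" using rotv_good[OF that E_sym'] .
    then have "good EE VV (addroot v' V T)" by (rule psi_good)
    then show ?thesis using good_st[OF finVV] unfolding rot_vertices_def by blast
  qed
  have stp: "rot_step EE (addroot v' V T1) (addroot v' V T2)"
    if TT: "T1 \<in> rot_vertices V E" "rot_step E T1 T2" for T1 T2
  proof -
    have g: "good E V T1" using rotv_good[OF TT(1) E_sym'] .
    obtain u w where tw: "T1 w = Some u" and T2: "T2 = rotate E T1 u w" using TT(2) unfolding rot_step_def by blast
    have "w \<in> V" using good_dom[OF g tw] .
    then have "addroot v' V T1 w = Some u" using tw v'V by (auto simp: addroot_def)
    moreover have "addroot v' V T2 = rotate EE (addroot v' V T1) u w" using psi_rot[OF g tw] T2 by simp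
    ultimately show ?thesis unfolding rot_step_def by blast
  qed
  have "colorable (rot_vertices V E) (rot_adj E) ?k"
    unfolding colorable_def
  proof (intro exI[of _ "\<lambda>T. c (addroot v' V T)"] conjI ballI impI)
    fix T assume "T \<in> rot_vertices V E"
    then show "c (addroot v' V T) < ?k" using inW c(1) by blast
  next
    fix T1 T2 assume T: "T1 \<in> rot_vertices V E" "T2 \<in> rot_vertices V E" "rot_adj E T1 T2"
    then have "rot_adj EE (addroot v' V T1) (addroot v' V T2)"
      using stp unfolding rot_adj_def by blast
    then show "c (addroot v' V T1) \<noteq> c (addroot v' V T2)" using c(2) inW T(1,2) by blast
  qed
  then show ?thesis by (rule chrom_le)
qed

lemma upper:
  assumes nc: "\<exists>x\<in>V. \<exists>y\<in>V. x \<noteq> y \<and> \<not> E x y"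
  shows "chromatic_number (rot_vertices VV EE) (rot_adj EE) \<le> chromatic_number (rot_vertices V E) (rot_adj E)"
proof -
  let ?k = "chromatic_number (rot_vertices V E) (rot_adj E)"
  have "colorable (rot_vertices V E) (rot_adj E) ?k" using colorable_rot[OF finV E_sym'] .
  then obtain c where c: "\<forall>x\<in>rot_vertices V E. c x < ?k"
    "\<forall>x\<in>rot_vertices V E. \<forall>y\<in>rot_vertices V E. rot_adj E x y \<longrightarrow> c x \<noteq> c y"
    unfolding colorable_def by blast
  obtain T1 T2 where T12: "good E V T1" "good E V T2" "rot_step E T1 T2" using edge_exists[OF nc] by blast
  have T12W: "T1 \<in> rot_vertices V E" "T2 \<in> rot_vertices V E"
    using T12 good_st[OF finV] unfolding rot_vertices_def by blast+
  have "c T1 \<noteq> c T2" using c(2) T12W T12(3) unfolding rot_adj_def by blast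
  moreover have "c T1 < ?k" "c T2 < ?k" using c(1) T12W by blast+
  ultimately have k2: "2 \<le> ?k" by linarith
  have phiW: "phi T \<in> rot_vertices V E" if "T \<in> rot_vertices VV EE" for T
  proof -
    have "good EE VV T" using rotv_good[OF that EE_sym'] .
    then have "good E V (phi T)" by (rule phi_good)
    then show ?thesis using good_st[OF finV] unfolding rot_vertices_def by blast
  qed
  have relc: "(c (phi T) + par T) mod ?k \<noteq> (c (phi T') + par T') mod ?k"
    if T: "T \<in> rot_vertices VV EE" "T' \<in> rot_vertices VV EE" "Rel T T'" for T T'
  proof (rule modcol)
    show "c (phi T) < ?k" "c (phi T') < ?k" using c(1) phiW T(1,2) by blast+
    show "par T < 2" "par T' < 2" "2 \<le> ?k" using par_lt k2 by auto
    show "c (phi T) \<noteq> c (phi T') \<and> par T = par T' \<or> c (phi T) = c (phi T') \<and> par T \<noteq> par T'"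
    proof (cases "rot_step E (phi T) (phi T') \<and> par T = par T'")
      case True
      then have "rot_adj E (phi T) (phi T')" unfolding rot_adj_def by blast
      then have "c (phi T) \<noteq> c (phi T')" using c(2) phiW T(1,2) by blast
      then show ?thesis using True by blast
    next
      case False
      then show ?thesis using T(3) unfolding Rel_def by auto
    qed
  qed
  have "colorable (rot_vertices VV EE) (rot_adj EE) ?k"
    unfolding colorable_def
  proof (intro exI[of _ "\<lambda>T. (c (phi T) + par T) mod ?k"] conjI ballI impI)
    fix T assume "T \<in> rot_vertices VV EE"
    show "(c (phi T) + par T) mod ?k < ?k" using k2 by simp
  next
    fix T T' assume T: "T \<in> rot_vertices VV EE" "T' \<in> rot_vertices VV EE" "rot_adj EE T T'"
    have g: "good EE VV T" "good EE VV T'" using rotv_good[OF T(1) EE_sym'] rotv_good[OF T(2) EE_sym'] by auto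
    have "Rel T T' \<or> Rel T' T"
      using T(3) main_rel[OF g] main_rel[OF g(2,1)] unfolding rot_adj_def by blast
    then show "(c (phi T) + par T) mod ?k \<noteq> (c (phi T') + par T') mod ?k"
    proof (elim disjE)
      assume "Rel T T'"
      then show ?thesis using relc[OF T(1,2)] by blast
    next
      assume "Rel T' T"
      then have "(c (phi T') + par T') mod ?k \<noteq> (c (phi T) + par T) mod ?k" using relc[OF T(2,1)] by blast
      then show ?thesis by simp
    qed
  qed
  then show ?thesis by (rule chrom_le)
qed

end

theorem proposition3p4:
  fixes V :: "'a set" and E :: "'a \<Rightarrow> 'a \<Rightarrow> bool" and v v' :: 'a
  assumes "simple_graph V E"
    and "connected_on E V"
    and "\<exists>x\<in>V. \<exists>y\<in>V. x \<noteq> y \<and> \<not> E x y"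
    and "v \<in> V" and "\<forall>x\<in>V. x \<noteq> v \<longrightarrow> E v x"
    and "v' \<notin> V"
  shows "chromatic_number (rot_vertices (insert v' V) (add_twin E v v')) (rot_adj (add_twin E v v'))
       = chromatic_number (rot_vertices V E) (rot_adj E)"
proof -
  interpret tw V E v v' using assms(1,4,5,6) by unfold_locales
  show ?thesis using lower upper[OF assms(3)] by linarith
qed


end
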